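(* Let $\alpha\in[1,\infty)$, let $n\ge 1$, and let $a_1,\dots,a_n\in\mathbb{R}^2$ be distinct points with masses $m_1,\dots,m_n>0$ forming a relative equilibrium, i.e. $a_i=\sum_{j\neq i} m_j\,\frac{a_i-a_j}{\|a_i-a_j\|^{\alpha+1}}$ for every $i$. Consider the planar potential $$V(x)=\frac{\|x\|^2}{2}+\sum_{j=1}^n m_j\,\phi_\alpha(\|x-a_j\|),\qquad x\in\mathbb{R}^2\setminus\{a_1,\dots,a_n\}.$$ Then $V$ has no local maximum points. Moreover, if $V$ is a Morse function (all its critical points are nondegenerate), then $$\#\{\text{saddle points of }V\}=n-1+\#\{\text{minimum points of }V\},$$ and, since $V$ has a global minimum, $V$ has at least $n$ saddle points.
   Context: $\phi_\alpha:(0,\infty)\to\mathbb{R}$ is a function with $\phi_\alpha'(r)=-1/r^{\alpha}$ (for $\alpha=2$ this is the gravitational potential $1/r$). This $V$ is the restriction to the plane of the potential governing a satellite attracted by the $n$ primaries in a frame rotating with angular speed $1$; its critical points are the planar equilibria of the satellite. *)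

theory Defs
  imports "HOL-Analysis.Analysis"
begin

text \<open>Points of the plane are elements of real^2. The n primaries are indexed by
  i < n (i.e. a 0, ..., a (n-1)).\<close>

definition primaries_domain :: "nat \<Rightarrow> (nat \<Rightarrow> real^2) \<Rightarrow> (real^2) set" where
  "primaries_domain n a = UNIV - a ` {..<n}"

definition planar_potential ::
  "(real \<Rightarrow> real) \<Rightarrow> nat \<Rightarrow> (nat \<Rightarrow> real) \<Rightarrow> (nat \<Rightarrow> real^2) \<Rightarrow> real^2 \<Rightarrow> real" where
  "planar_potential phi n m a x =
     (norm x)^2 / 2 + (\<Sum>j<n. m j * phi (norm (x - a j)))"

definition relative_equilibrium ::
  "real \<Rightarrow> nat \<Rightarrow> (nat \<Rightarrow> real) \<Rightarrow> (nat \<Rightarrow> real^2) \<Rightarrow> bool" where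
  "relative_equilibrium \<alpha> n m a \<longleftrightarrow>
     (\<forall>i<n. a i = (\<Sum>j\<in>{..<n} - {i}.
        (m j / (norm (a i - a j) powr (\<alpha> + 1))) *\<^sub>R (a i - a j)))"

definition local_max_point :: "(real^2 \<Rightarrow> real) \<Rightarrow> (real^2) set \<Rightarrow> real^2 \<Rightarrow> bool" where
  "local_max_point f S x \<longleftrightarrow> x \<in> S \<and> (\<exists>e>0. \<forall>y\<in>S. dist y x < e \<longrightarrow> f y \<le> f x)"

definition local_min_point :: "(real^2 \<Rightarrow> real) \<Rightarrow> (real^2) set \<Rightarrow> real^2 \<Rightarrow> bool" where
  "local_min_point f S x \<longleftrightarrow> x \<in> S \<and> (\<exists>e>0. \<forall>y\<in>S. dist y x < e \<longrightarrow> f x \<le> f y)"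

definition global_min_point :: "(real^2 \<Rightarrow> real) \<Rightarrow> (real^2) set \<Rightarrow> real^2 \<Rightarrow> bool" where
  "global_min_point f S x \<longleftrightarrow> x \<in> S \<and> (\<forall>y\<in>S. f x \<le> f y)"

definition critical_point :: "(real^2 \<Rightarrow> real) \<Rightarrow> (real^2) set \<Rightarrow> real^2 \<Rightarrow> bool" where
  "critical_point f S x \<longleftrightarrow> x \<in> S \<and> (f has_derivative (\<lambda>h. 0)) (at x)"

definition nondegenerate_critical_point ::
  "(real^2 \<Rightarrow> real) \<Rightarrow> (real^2) set \<Rightarrow> real^2 \<Rightarrow> bool" where
  "nondegenerate_critical_point f S x \<longleftrightarrow> critical_point f S x \<and>
     (\<exists>U g H. open U \<and> x \<in> U \<and> U \<subseteq> S \<and>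
        (\<forall>y\<in>U. (f has_derivative (\<lambda>h. g y \<bullet> h)) (at y)) \<and>
        (g has_derivative H) (at x) \<and> (\<forall>h. H h = 0 \<longrightarrow> h = 0))"

definition is_morse_on :: "(real^2 \<Rightarrow> real) \<Rightarrow> (real^2) set \<Rightarrow> bool" where
  "is_morse_on f S \<longleftrightarrow> (\<forall>x. critical_point f S x \<longrightarrow> nondegenerate_critical_point f S x)"

definition saddle_point :: "(real^2 \<Rightarrow> real) \<Rightarrow> (real^2) set \<Rightarrow> real^2 \<Rightarrow> bool" where
  "saddle_point f S x \<longleftrightarrow> critical_point f S x \<and>
     \<not> local_min_point f S x \<and> \<not> local_max_point f S x"

end

theory Submission
  imports Defs "HOL-Complex_Analysis.Complex_Analysis"
begin


lemma inner_scaleR_self_complex: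
  fixes h d :: complex
  shows "(h \<bullet> d) *\<^sub>R d = (of_real ((norm d)^2) * h + d^2 * cnj h) / 2"
  unfolding complex_eq_iff by (simp add: inner_complex_def cmod_power2) (simp add: power2_eq_square algebra_simps)

lemma term_alg:
  fixes d h :: complex and k p s r :: real
  assumes "r > 0"
  shows "(k * p * s / r^2) *\<^sub>R ((of_real (r^2) * h + d^2 * cnj h) / 2) + (k * p) *\<^sub>R h
    = of_real (k * p * (1 + s/2)) * h + of_real (k * p * s / (2 * r^2)) * d^2 * cnj h"
  using assms by (simp add: scaleR_conv_of_real field_simps)

lemma term_deriv:
  fixes c z :: complex and k s :: real
  assumes "z \<noteq> c"
  defines "r \<equiv> norm (z - c)"
  shows "((\<lambda>z. (k * norm (z - c) powr s) *\<^sub>R (z - c)) has_derivative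
     (\<lambda>h. of_real (k * r powr s * (1 + s/2)) * h + of_real (k * r powr s * s / (2 * r^2)) * (z - c)^2 * cnj h)) (at z)"
proof -
  have r0: "r > 0" using assms by simp
  have dn: "((\<lambda>z. norm (z - c)) has_derivative (\<lambda>h. h \<bullet> sgn (z - c))) (at z)"
    using has_derivative_norm[of "z - c"] assms
    by (auto intro!: derivative_eq_intros has_derivative_compose[of "\<lambda>z. z - c" _ _ _ norm] simp: gderiv_def)
  have dp: "((\<lambda>z. norm (z - c) powr s) has_derivative (\<lambda>h. r powr s * (0 * ln r + (h \<bullet> sgn (z - c)) * s / r))) (at z)"
    unfolding r_def
    by (rule has_derivative_powr[OF dn]) (use assms in \<open>auto intro!: derivative_eq_intros\<close>)
  have dd: "((\<lambda>z. z - c) has_derivative (\<lambda>h. h)) (at z)" by (auto intro!: derivative_eq_intros)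
  have "((\<lambda>z. (k * norm (z - c) powr s) *\<^sub>R (z - c)) has_derivative
     (\<lambda>h. (k * (r powr s * (0 * ln r + (h \<bullet> sgn (z - c)) * s / r))) *\<^sub>R (z - c) + (k * norm (z - c) powr s) *\<^sub>R h)) (at z)"
    using has_derivative_scaleR[OF has_derivative_mult_right[OF dp, of k] dd]
    by (simp add: r_def add.commute)
  moreover have "(\<lambda>h. (k * (r powr s * (0 * ln r + (h \<bullet> sgn (z - c)) * s / r))) *\<^sub>R (z - c) + (k * norm (z - c) powr s) *\<^sub>R h)
     = (\<lambda>h. of_real (k * r powr s * (1 + s/2)) * h + of_real (k * r powr s * s / (2 * r^2)) * (z - c)^2 * cnj h)"
  proof
    fix h :: complex
    have "(h \<bullet> sgn (z - c)) = (h \<bullet> (z - c)) / r" by (simp add: sgn_div_norm r_def inner_commute divide_inverse mult.commute)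
    hence "(k * (r powr s * (0 * ln r + (h \<bullet> sgn (z - c)) * s / r))) *\<^sub>R (z - c)
        = (k * r powr s * s / r^2) *\<^sub>R ((h \<bullet> (z - c)) *\<^sub>R (z - c))"
      by (simp add: power2_eq_square field_simps)
    also have "\<dots> = (k * r powr s * s / r^2) *\<^sub>R ((of_real (r^2) * h + (z - c)^2 * cnj h) / 2)"
      by (simp add: inner_scaleR_self_complex r_def)
    finally show "(k * (r powr s * (0 * ln r + (h \<bullet> sgn (z - c)) * s / r))) *\<^sub>R (z - c) + (k * norm (z - c) powr s) *\<^sub>R h
       = of_real (k * r powr s * (1 + s/2)) * h + of_real (k * r powr s * s / (2 * r^2)) * (z - c)^2 * cnj h"
      using term_alg[OF r0, where d="z-c" and h=h and k=k and p="r powr s" and s=s] by (simp add: r_def)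
  qed
  ultimately show ?thesis by simp
qed

lemma norm_deriv:
  fixes z c :: complex
  assumes "z \<noteq> c"
  shows "((\<lambda>z. norm (z - c)) has_derivative (\<lambda>h. (h \<bullet> (z - c)) / norm (z - c))) (at z)"
proof -
  have "((\<lambda>z. norm (z - c)) has_derivative (\<lambda>h. h \<bullet> sgn (z - c))) (at z)"
    using has_derivative_norm[of "z - c"] assms
    by (auto intro!: derivative_eq_intros has_derivative_compose[of "\<lambda>z. z - c" _ _ _ norm] simp: gderiv_def)
  moreover have "(\<lambda>h. h \<bullet> sgn (z - c)) = (\<lambda>h. (h \<bullet> (z - c)) / norm (z - c))"
    by (simp add: sgn_div_norm inner_commute divide_inverse mult.commute)
  ultimately show ?thesis by simp
qed

locale sat =
  fixes \<alpha> :: real and n :: nat and m :: "nat \<Rightarrow> real" and b :: "nat \<Rightarrow> complex"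
    and phi :: "real \<Rightarrow> real"
  assumes alpha: "\<alpha> \<ge> 1" and mpos: "\<And>i. i < n \<Longrightarrow> m i > 0" and binj: "inj_on b {..<n}"
    and phid: "\<And>r. r > 0 \<Longrightarrow> (phi has_real_derivative (- 1 / r powr \<alpha>)) (at r)"
begin

definition "B = b ` {..<n}"
definition "G z = z - (\<Sum>j<n. (m j * norm (z - b j) powr (-(\<alpha>+1))) *\<^sub>R (z - b j))"
definition "V z = (norm z)^2/2 + (\<Sum>j<n. m j * phi (norm (z - b j)))"
definition "P z = 1 + (\<Sum>j<n. m j * norm (z - b j) powr (-(\<alpha>+1)) * (\<alpha> - 1) / 2)"
definition "Q z = (\<Sum>j<n. of_real (m j * norm (z - b j) powr (-(\<alpha>+1)) * (\<alpha>+1) / (2 * (norm (z - b j))^2)) * (z - b j)^2)"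
definition "L z h = of_real (P z) * h + Q z * cnj h"

lemma notB: "z \<notin> B \<Longrightarrow> j < n \<Longrightarrow> z \<noteq> b j"
  unfolding B_def by auto

lemma G_deriv:
  assumes "z \<notin> B"
  shows "(G has_derivative L z) (at z)"
proof -
  define s where "s = -(\<alpha>+1)"
  have "((\<lambda>z. \<Sum>j<n. (m j * norm (z - b j) powr s) *\<^sub>R (z - b j)) has_derivative
     (\<lambda>h. \<Sum>j<n. of_real (m j * norm (z - b j) powr s * (1 + s/2)) * h
        + of_real (m j * norm (z - b j) powr s * s / (2 * (norm (z - b j))^2)) * (z - b j)^2 * cnj h)) (at z)"
    by (rule has_derivative_sum) (use term_deriv notB[OF assms] in blast)
  from has_derivative_diff[OF has_derivative_ident this]
  have "(G has_derivative (\<lambda>h. h - (\<Sum>j<n. of_real (m j * norm (z - b j) powr s * (1 + s/2)) * h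
        + of_real (m j * norm (z - b j) powr s * s / (2 * (norm (z - b j))^2)) * (z - b j)^2 * cnj h))) (at z)"
    unfolding G_def s_def by simp
  moreover have "(\<lambda>h. h - (\<Sum>j<n. of_real (m j * norm (z - b j) powr s * (1 + s/2)) * h
        + of_real (m j * norm (z - b j) powr s * s / (2 * (norm (z - b j))^2)) * (z - b j)^2 * cnj h)) = L z"
  proof
    fix h :: complex
    have e1: "(\<Sum>j<n. of_real (m j * norm (z - b j) powr s * (1 + s/2)) * h) = 
       (1 - of_real (P z)) * h"
    proof -
      have "(\<Sum>j<n. m j * norm (z - b j) powr s * (1 + s/2)) = 1 - P z"
        unfolding P_def s_def by (simp add: sum_negf[symmetric]) (rule sum.cong, simp_all add: field_simps)
      then show ?thesis unfolding sum_distrib_right[symmetric] of_real_sum[symmetric] by simp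
    qed
    have e2: "(\<Sum>j<n. of_real (m j * norm (z - b j) powr s * s / (2 * (norm (z - b j))^2)) * (z - b j)^2 * cnj h)
       = - Q z * cnj h"
      unfolding Q_def s_def sum_distrib_right sum_negf[symmetric]
      by (rule sum.cong, simp, simp only: mult_minus_right divide_minus_left of_real_minus mult_minus_left)
    show "h - (\<Sum>j<n. of_real (m j * norm (z - b j) powr s * (1 + s/2)) * h
        + of_real (m j * norm (z - b j) powr s * s / (2 * (norm (z - b j))^2)) * (z - b j)^2 * cnj h) = L z h"
      unfolding sum.distrib e1 e2 L_def by (simp add: algebra_simps)
  qed
  ultimately show ?thesis by simp
qed

lemma powr_neg_succ: "r > 0 \<Longrightarrow> r powr (-(\<alpha>+1)) = 1 / (r powr \<alpha> * r)"
proof -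
  assume r: "r > 0"
  have "r powr (\<alpha>+1) = r powr \<alpha> * r" using r by (simp add: powr_add)
  moreover have "r powr (-(\<alpha>+1)) = 1 / r powr (\<alpha>+1)" by (rule powr_minus_divide)
  ultimately show ?thesis by simp
qed

lemma V_deriv:
  assumes "z \<notin> B"
  shows "(V has_derivative (\<lambda>h. G z \<bullet> h)) (at z)"
proof -
  have d1: "((\<lambda>z. (norm z)^2/2) has_derivative (\<lambda>h. z \<bullet> h)) (at z)"
    unfolding power2_norm_eq_inner by (auto intro!: derivative_eq_intros simp: inner_commute)
  have d2: "((\<lambda>z. m j * phi (norm (z - b j))) has_derivative
     (\<lambda>h. m j * ((- 1 / norm (z - b j) powr \<alpha>) * ((h \<bullet> (z - b j)) / norm (z - b j))))) (at z)"
    if j: "j < n" for j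
  proof -
    have zb: "z \<noteq> b j" using notB[OF assms j] .
    have "((\<lambda>z. phi (norm (z - b j))) has_derivative
       (\<lambda>h. (- 1 / norm (z - b j) powr \<alpha>) * ((h \<bullet> (z - b j)) / norm (z - b j)))) (at z)"
      using has_derivative_compose[OF norm_deriv[OF zb] phid[unfolded has_field_derivative_def, of "norm (z - b j)"]] zb
      by simp
    from has_derivative_mult_right[OF this, of "m j"] show ?thesis by simp
  qed
  have "(V has_derivative (\<lambda>h. z \<bullet> h + (\<Sum>j<n. m j * ((- 1 / norm (z - b j) powr \<alpha>) * ((h \<bullet> (z - b j)) / norm (z - b j)))))) (at z)"
    unfolding V_def by (rule has_derivative_add[OF d1 has_derivative_sum]) (use d2 in auto)
  moreover have "(\<lambda>h. z \<bullet> h + (\<Sum>j<n. m j * ((- 1 / norm (z - b j) powr \<alpha>) * ((h \<bullet> (z - b j)) / norm (z - b j))))) = (\<lambda>h. G z \<bullet> h)"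
  proof
    fix h :: complex
    have "(\<Sum>j<n. m j * ((- 1 / norm (z - b j) powr \<alpha>) * ((h \<bullet> (z - b j)) / norm (z - b j))))
       = - (\<Sum>j<n. ((m j * norm (z - b j) powr (-(\<alpha>+1))) *\<^sub>R (z - b j)) \<bullet> h)"
      unfolding sum_negf[symmetric]
    proof (rule sum.cong)
      fix j assume "j \<in> {..<n}"
      then have r: "norm (z - b j) > 0" using notB[OF assms] by auto
      show "m j * ((- 1 / norm (z - b j) powr \<alpha>) * ((h \<bullet> (z - b j)) / norm (z - b j)))
         = - (((m j * norm (z - b j) powr (-(\<alpha>+1))) *\<^sub>R (z - b j)) \<bullet> h)"
        using powr_neg_succ[OF r] by (simp add: inner_commute)
    qed simp
    then show "z \<bullet> h + (\<Sum>j<n. m j * ((- 1 / norm (z - b j) powr \<alpha>) * ((h \<bullet> (z - b j)) / norm (z - b j)))) = G z \<bullet> h"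
      unfolding G_def by (simp add: inner_diff_left inner_sum_left)
  qed
  ultimately show ?thesis by simp
qed

end


context sat begin

lemma finite_B: "finite B" unfolding B_def by simp
lemma open_nB: "open (- B)" using finite_B by (simp add: finite_imp_closed open_Compl)

lemma L_scaleR: "L z (c *\<^sub>R v) = c *\<^sub>R L z v"
  unfolding L_def by (simp add: scaleR_conv_of_real algebra_simps)

lemma L_zero: "L z 0 = 0" unfolding L_def by simp

lemma line_deriv:
  assumes "z + s *\<^sub>R v \<notin> B"
  shows "((\<lambda>s. V (z + s *\<^sub>R v)) has_real_derivative (G (z + s *\<^sub>R v) \<bullet> v)) (at s)"
proof -
  have "((\<lambda>s. z + s *\<^sub>R v) has_derivative (\<lambda>h. h *\<^sub>R v)) (at s)"
    by (auto intro!: derivative_eq_intros)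
  from has_derivative_compose[OF this V_deriv[OF assms]]
  have "((\<lambda>s. V (z + s *\<^sub>R v)) has_derivative (\<lambda>h. G (z + s *\<^sub>R v) \<bullet> (h *\<^sub>R v))) (at s)"
    by (simp add: o_def)
  moreover have "(\<lambda>h. G (z + s *\<^sub>R v) \<bullet> (h *\<^sub>R v)) = (*) (G (z + s *\<^sub>R v) \<bullet> v)"
    by (auto simp: mult.commute)
  ultimately show ?thesis by (simp add: has_field_derivative_def)
qed

lemma mvt_line:
  assumes "t > 0" "\<And>s. 0 \<le> s \<Longrightarrow> s \<le> t \<Longrightarrow> z + s *\<^sub>R v \<notin> B"
  shows "\<exists>\<theta>. 0 < \<theta> \<and> \<theta> < t \<and> V (z + t *\<^sub>R v) - V z = t * (G (z + \<theta> *\<^sub>R v) \<bullet> v)"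
  using MVT2[OF assms(1), of "\<lambda>s. V (z + s *\<^sub>R v)" "\<lambda>s. G (z + s *\<^sub>R v) \<bullet> v"] line_deriv assms(2)
  by auto

lemma G_approx:
  assumes "z \<notin> B" "\<epsilon> > 0"
  shows "\<exists>d>0. \<forall>y. norm (y - z) < d \<longrightarrow> y \<notin> B \<and> norm (G y - G z - L z (y - z)) \<le> \<epsilon> * norm (y - z)"
proof -
  obtain d1 where d1: "d1 > 0" "\<forall>y. norm (y - z) < d1 \<longrightarrow> norm (G y - G z - L z (y - z)) \<le> \<epsilon> * norm (y - z)"
    using G_deriv[OF assms(1)] assms(2) unfolding has_derivative_at_alt by blast
  obtain d2 where d2: "d2 > 0" "ball z d2 \<subseteq> - B"
    using open_nB assms(1) open_contains_ball by blast
  have "y \<notin> B" if "norm (y - z) < d2" for y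
    using d2 that by (auto simp: dist_norm norm_minus_commute subset_iff)
  then show ?thesis
    by (intro exI[of _ "min d1 d2"]) (use d1 d2 in auto)
qed

lemma L_quad: "(L z v) \<bullet> v = P z * (norm v)^2 + (Q z * cnj v) \<bullet> v"
  unfolding L_def by (simp add: inner_add_left power2_norm_eq_inner scaleR_conv_of_real[symmetric])

lemma Q_quad_bound: "\<bar>(Q z * cnj v) \<bullet> v\<bar> \<le> norm (Q z) * (norm v)^2"
proof -
  have "\<bar>(Q z * cnj v) \<bullet> v\<bar> \<le> norm (Q z * cnj v) * norm v" by (rule Cauchy_Schwarz_ineq2)
  also have "\<dots> = norm (Q z) * (norm v)^2" by (simp add: norm_mult power2_eq_square)
  finally show ?thesis .
qed

lemma G_line_est:
  assumes "norm (G y - G z - L z (y - z)) \<le> \<epsilon> * norm (y - z)" "G z = 0" "y = z + \<theta> *\<^sub>R v" "\<theta> > 0"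
  shows "\<bar>G y \<bullet> v - \<theta> * ((L z v) \<bullet> v)\<bar> \<le> \<epsilon> * \<theta> * (norm v)^2"
proof -
  define E where "E = G y - \<theta> *\<^sub>R L z v"
  have Ey: "G y = \<theta> *\<^sub>R L z v + E" unfolding E_def by simp
  have "norm E \<le> \<epsilon> * (\<theta> * norm v)" using assms by (simp add: E_def L_scaleR)
  moreover have "\<bar>E \<bullet> v\<bar> \<le> norm E * norm v"
    using Cauchy_Schwarz_ineq2[of E v] by linarith
  ultimately have "\<bar>E \<bullet> v\<bar> \<le> \<epsilon> * \<theta> * (norm v)^2"
    by (smt (verit) mult.assoc mult_right_mono norm_ge_zero power2_eq_square)
  then show ?thesis unfolding Ey by (simp add: inner_add_left)
qed

lemma dir_gen:
  assumes z: "z \<notin> B" "G z = 0" and c: "(L z v) \<bullet> v \<noteq> 0"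
  shows "\<exists>\<delta>>0. \<forall>t. 0 < t \<and> t < \<delta> \<longrightarrow> z + t *\<^sub>R v \<notin> B \<and> 
     (\<exists>\<theta>>0. \<bar>(V (z + t *\<^sub>R v) - V z) / t - \<theta> * ((L z v) \<bullet> v)\<bar> \<le> \<theta> * \<bar>(L z v) \<bullet> v\<bar> / 2)"
proof -
  define c where "c = \<bar>(L z v) \<bullet> v\<bar>"
  have c0: "c > 0" using c by (simp add: c_def)
  have v0: "v \<noteq> 0" using c L_zero by auto
  define \<epsilon> where "\<epsilon> = c / (2 * (norm v)^2)"
  have eps: "\<epsilon> > 0" using c0 v0 by (simp add: \<epsilon>_def)
  obtain d where d: "d > 0" "\<forall>y. norm (y - z) < d \<longrightarrow> y \<notin> B \<and> norm (G y - G z - L z (y - z)) \<le> \<epsilon> * norm (y - z)"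
    using G_approx[OF z(1) eps] by blast
  have main: "z + t *\<^sub>R v \<notin> B \<and> 
     (\<exists>\<theta>>0. \<bar>(V (z + t *\<^sub>R v) - V z) / t - \<theta> * ((L z v) \<bullet> v)\<bar> \<le> \<theta> * \<bar>(L z v) \<bullet> v\<bar> / 2)"
    if t: "0 < t \<and> t < d / norm v" for t
  proof
    have inb: "norm (z + s *\<^sub>R v - z) < d" if "0 \<le> s" "s \<le> t" for s
    proof -
      have "norm (z + s *\<^sub>R v - z) = s * norm v" using that by simp
      also have "\<dots> \<le> t * norm v" using that by (simp add: mult_right_mono)
      also have "\<dots> < d" using t v0 by (simp add: pos_less_divide_eq)
      finally show ?thesis .
    qed
    show "z + t *\<^sub>R v \<notin> B" using inb[of t] t d by force
    obtain \<theta> where th: "0 < \<theta>" "\<theta> < t" "V (z + t *\<^sub>R v) - V z = t * (G (z + \<theta> *\<^sub>R v) \<bullet> v)"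
      using mvt_line[of t z v] t d inb by blast
    have "\<bar>G (z + \<theta> *\<^sub>R v) \<bullet> v - \<theta> * ((L z v) \<bullet> v)\<bar> \<le> \<epsilon> * \<theta> * (norm v)^2"
    proof (rule G_line_est)
      have "norm (z + \<theta> *\<^sub>R v - z) < d" using inb th by simp
      then show "norm (G (z + \<theta> *\<^sub>R v) - G z - L z (z + \<theta> *\<^sub>R v - z)) \<le> \<epsilon> * norm (z + \<theta> *\<^sub>R v - z)"
        using d by blast
    qed (use th z in auto)
    moreover have "\<epsilon> * \<theta> * (norm v)^2 = \<theta> * c / 2" using v0 by (simp add: \<epsilon>_def)
    moreover have "(V (z + t *\<^sub>R v) - V z) / t = G (z + \<theta> *\<^sub>R v) \<bullet> v" using th t by simp
    ultimately show "\<exists>\<theta>>0. \<bar>(V (z + t *\<^sub>R v) - V z) / t - \<theta> * ((L z v) \<bullet> v)\<bar> \<le> \<theta> * \<bar>(L z v) \<bullet> v\<bar> / 2"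
      using th(1) c_def by auto
  qed
  moreover have "d / norm v > 0" using d v0 by simp
  ultimately show ?thesis by blast
qed

lemma dir_pos:
  assumes z: "z \<notin> B" "G z = 0" and c: "(L z v) \<bullet> v > 0"
  shows "\<exists>\<delta>>0. \<forall>t. 0 < t \<and> t < \<delta> \<longrightarrow> z + t *\<^sub>R v \<notin> B \<and> V z < V (z + t *\<^sub>R v)"
proof -
  obtain \<delta> where d: "\<delta> > 0" "\<forall>t. 0 < t \<and> t < \<delta> \<longrightarrow> z + t *\<^sub>R v \<notin> B \<and> 
     (\<exists>\<theta>>0. \<bar>(V (z + t *\<^sub>R v) - V z) / t - \<theta> * ((L z v) \<bullet> v)\<bar> \<le> \<theta> * \<bar>(L z v) \<bullet> v\<bar> / 2)"
    using dir_gen[OF z, of v] c by (metis less_irrefl)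
  show ?thesis
  proof (intro exI[of _ \<delta>] conjI allI impI)
    fix t assume t: "0 < t \<and> t < \<delta>"
    then obtain \<theta> where th: "\<theta> > 0" "\<bar>(V (z + t *\<^sub>R v) - V z) / t - \<theta> * ((L z v) \<bullet> v)\<bar> \<le> \<theta> * \<bar>(L z v) \<bullet> v\<bar> / 2"
      using d by blast
    have a: "\<theta> * ((L z v) \<bullet> v) > 0" using th c by simp
    have "\<theta> * \<bar>(L z v) \<bullet> v\<bar> = \<bar>\<theta> * ((L z v) \<bullet> v)\<bar>" using th by (simp add: abs_mult)
    then have "(V (z + t *\<^sub>R v) - V z) / t > 0" using th(2) a unfolding abs_le_iff by linarith
    then show "V z < V (z + t *\<^sub>R v)" using t by (simp add: zero_less_divide_iff)
    show "z + t *\<^sub>R v \<notin> B" using d t by blast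
  qed (fact d(1))
qed

lemma dir_neg:
  assumes z: "z \<notin> B" "G z = 0" and c: "(L z v) \<bullet> v < 0"
  shows "\<exists>\<delta>>0. \<forall>t. 0 < t \<and> t < \<delta> \<longrightarrow> z + t *\<^sub>R v \<notin> B \<and> V (z + t *\<^sub>R v) < V z"
proof -
  obtain \<delta> where d: "\<delta> > 0" "\<forall>t. 0 < t \<and> t < \<delta> \<longrightarrow> z + t *\<^sub>R v \<notin> B \<and> 
     (\<exists>\<theta>>0. \<bar>(V (z + t *\<^sub>R v) - V z) / t - \<theta> * ((L z v) \<bullet> v)\<bar> \<le> \<theta> * \<bar>(L z v) \<bullet> v\<bar> / 2)"
    using dir_gen[OF z, of v] c by (metis less_irrefl)
  show ?thesis
  proof (intro exI[of _ \<delta>] conjI allI impI)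
    fix t assume t: "0 < t \<and> t < \<delta>"
    then obtain \<theta> where th: "\<theta> > 0" "\<bar>(V (z + t *\<^sub>R v) - V z) / t - \<theta> * ((L z v) \<bullet> v)\<bar> \<le> \<theta> * \<bar>(L z v) \<bullet> v\<bar> / 2"
      using d by blast
    have a: "\<theta> * ((L z v) \<bullet> v) < 0" using th c by (simp add: mult_pos_neg)
    have "\<theta> * \<bar>(L z v) \<bullet> v\<bar> = \<bar>\<theta> * ((L z v) \<bullet> v)\<bar>" using th by (simp add: abs_mult)
    then have "(V (z + t *\<^sub>R v) - V z) / t < 0" using th(2) a unfolding abs_le_iff by linarith
    then show "V (z + t *\<^sub>R v) < V z" using t by (simp add: divide_less_0_iff)
    show "z + t *\<^sub>R v \<notin> B" using d t by blast
  qed (fact d(1))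
qed

end

context sat begin

definition "lmin z \<longleftrightarrow> z \<notin> B \<and> (\<exists>e>0. \<forall>y. y \<notin> B \<longrightarrow> dist y z < e \<longrightarrow> V z \<le> V y)"
definition "lmax z \<longleftrightarrow> z \<notin> B \<and> (\<exists>e>0. \<forall>y. y \<notin> B \<longrightarrow> dist y z < e \<longrightarrow> V y \<le> V z)"

lemma P_ge1: "P z \<ge> 1"
proof -
  have "(\<Sum>j<n. m j * norm (z - b j) powr (-(\<alpha>+1)) * (\<alpha> - 1) / 2) \<ge> 0"
    using mpos alpha by (intro sum_nonneg divide_nonneg_pos mult_nonneg_nonneg) (auto simp: less_imp_le)
  then show ?thesis unfolding P_def by simp
qed

lemma inner_cnj: "(x::complex) \<bullet> y = Re (cnj x * y)"
  by (simp add: inner_complex_def)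

lemma dir_Q:
  fixes q :: complex and \<sigma> :: real
  assumes "\<sigma> = 1 \<or> \<sigma> = -1"
  shows "\<exists>v. norm v = 1 \<and> (q * cnj v) \<bullet> v = \<sigma> * norm q"
proof (cases "q = 0")
  case True then show ?thesis by (intro exI[of _ 1]) simp
next
  case False
  define v where "v = csqrt (of_real \<sigma> * q / of_real (norm q))"
  have "norm v = 1" using False assms by (auto simp: v_def norm_divide norm_mult)
  moreover have "(q * cnj v) \<bullet> v = Re (cnj q * v^2)"
    by (simp add: inner_cnj power2_eq_square mult.assoc)
  moreover have "cnj q * v^2 = of_real (\<sigma> * norm q)"
  proof -
    have "v^2 = of_real \<sigma> * q / of_real (norm q)" by (simp add: v_def)
    then have "cnj q * v^2 = of_real \<sigma> * (q * cnj q) / of_real (norm q)" by (simp add: algebra_simps)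
    also have "\<dots> = of_real \<sigma> * (of_real (norm q))^2 / of_real (norm q)" by (simp add: complex_norm_square[symmetric])
    also have "\<dots> = of_real (\<sigma> * norm q)" using False by (simp add: power2_eq_square)
    finally show ?thesis .
  qed
  ultimately show ?thesis by (intro exI[of _ v]) simp
qed

lemma not_lmax_dir:
  assumes "v \<noteq> 0" "\<delta> > 0" "\<And>t. 0 < t \<Longrightarrow> t < \<delta> \<Longrightarrow> z + t *\<^sub>R v \<notin> B \<and> V z < V (z + t *\<^sub>R v)"
  shows "\<not> lmax z"
proof
  assume "lmax z"
  then obtain e where e: "e > 0" "\<forall>y. y \<notin> B \<longrightarrow> dist y z < e \<longrightarrow> V y \<le> V z" unfolding lmax_def by blast
  define t where "t = min \<delta> (e / norm v) / 2"
  have "e / norm v > 0" using assms e by simp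
  then have m: "0 < min \<delta> (e / norm v)" "min \<delta> (e / norm v) \<le> \<delta>" "min \<delta> (e / norm v) \<le> e / norm v"
    using assms by auto
  have t1: "0 < t" unfolding t_def using m(1) by (simp only: half_gt_zero)
  have t2: "t < \<delta>" unfolding t_def using m(1,2) by (metis half_gt_zero less_add_same_cancel1 field_sum_of_halves order_less_le_trans)
  have t3: "t < e / norm v" unfolding t_def using m(1,3) by (metis half_gt_zero less_add_same_cancel1 field_sum_of_halves order_less_le_trans)
  note t = t1 t2 t3
  have "dist (z + t *\<^sub>R v) z = t * norm v" using t by (simp add: dist_norm)
  also have "\<dots> < e" using t assms by (simp add: pos_less_divide_eq)
  finally show False using e assms(3)[OF t(1,2)] by force
qed

lemma not_lmin_dir:
  assumes "v \<noteq> 0" "\<delta> > 0" "\<And>t. 0 < t \<Longrightarrow> t < \<delta> \<Longrightarrow> z + t *\<^sub>R v \<notin> B \<and> V (z + t *\<^sub>R v) < V z"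
  shows "\<not> lmin z"
proof
  assume "lmin z"
  then obtain e where e: "e > 0" "\<forall>y. y \<notin> B \<longrightarrow> dist y z < e \<longrightarrow> V z \<le> V y" unfolding lmin_def by blast
  define t where "t = min \<delta> (e / norm v) / 2"
  have "e / norm v > 0" using assms e by simp
  then have m: "0 < min \<delta> (e / norm v)" "min \<delta> (e / norm v) \<le> \<delta>" "min \<delta> (e / norm v) \<le> e / norm v"
    using assms by auto
  have t1: "0 < t" unfolding t_def using m(1) by (simp only: half_gt_zero)
  have t2: "t < \<delta>" unfolding t_def using m(1,2) by (metis half_gt_zero less_add_same_cancel1 field_sum_of_halves order_less_le_trans)
  have t3: "t < e / norm v" unfolding t_def using m(1,3) by (metis half_gt_zero less_add_same_cancel1 field_sum_of_halves order_less_le_trans)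
  note t = t1 t2 t3
  have "dist (z + t *\<^sub>R v) z = t * norm v" using t by (simp add: dist_norm)
  also have "\<dots> < e" using t assms by (simp add: pos_less_divide_eq)
  finally show False using e assms(3)[OF t(1,2)] by force
qed

lemma near_nB:
  assumes "z \<notin> B"
  shows "\<exists>d>0. \<forall>y. norm (y - z) < d \<longrightarrow> y \<notin> B"
proof -
  obtain d2 where d2: "d2 > 0" "ball z d2 \<subseteq> - B"
    using open_nB assms open_contains_ball by blast
  then show ?thesis by (auto simp: dist_norm norm_minus_commute subset_iff intro!: exI[of _ d2])
qed

lemma grad_dir:
  assumes z: "z \<notin> B" and "G z \<bullet> v \<noteq> 0"
  shows "\<exists>\<delta>>0. \<forall>t. 0 < t \<and> t < \<delta> \<longrightarrow> z + t *\<^sub>R v \<notin> B \<and> 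
           (if G z \<bullet> v > 0 then V z < V (z + t *\<^sub>R v) else V (z + t *\<^sub>R v) < V z)"
proof -
  have v0: "v \<noteq> 0" using assms by auto
  have der: "((\<lambda>s. V (z + s *\<^sub>R v)) has_real_derivative (G (z + 0 *\<^sub>R v) \<bullet> v)) (at 0)"
    by (rule line_deriv) (use z in simp)
  obtain d1 where d1: "d1 > 0" "\<forall>h>0. h < d1 \<longrightarrow> (if G z \<bullet> v > 0 then V z < V (z + h *\<^sub>R v) else V (z + h *\<^sub>R v) < V z)"
  proof (cases "G z \<bullet> v > 0")
    case True
    then obtain d where "d > 0" "\<forall>h>0. h < d \<longrightarrow> V (z + 0 *\<^sub>R v) < V (z + (0 + h) *\<^sub>R v)"
      using DERIV_pos_inc_right[OF der] by auto
    then show ?thesis using that True by auto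
  next
    case False
    then have "G z \<bullet> v < 0" using assms by linarith
    then obtain d where "d > 0" "\<forall>h>0. h < d \<longrightarrow> V (z + 0 *\<^sub>R v) > V (z + (0 + h) *\<^sub>R v)"
      using DERIV_neg_dec_right[OF der] by auto
    then show ?thesis using that False by auto
  qed
  obtain d2 where d2: "d2 > 0" "\<forall>y. norm (y - z) < d2 \<longrightarrow> y \<notin> B" using near_nB[OF z] by blast
  show ?thesis
  proof (intro exI[of _ "min d1 (d2 / norm v)"] conjI allI impI)
    show "min d1 (d2 / norm v) > 0" using d1 d2 v0 by simp
    fix t assume t: "0 < t \<and> t < min d1 (d2 / norm v)"
    then have "norm (z + t *\<^sub>R v - z) < d2" using v0 by (simp add: pos_less_divide_eq)
    then show "z + t *\<^sub>R v \<notin> B" using d2 by blast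
    show "(if G z \<bullet> v > 0 then V z < V (z + t *\<^sub>R v) else V (z + t *\<^sub>R v) < V z)"
      using d1 t by auto
  qed
qed

theorem no_lmax: "\<not> lmax z"
proof (cases "z \<in> B")
  case True then show ?thesis by (simp add: lmax_def)
next
  case False
  show ?thesis
  proof (cases "G z = 0")
    case False
    have gp: "G z \<bullet> G z > 0" using False by simp
    obtain \<delta> where "\<delta> > 0" "\<forall>t. 0 < t \<and> t < \<delta> \<longrightarrow> z + t *\<^sub>R G z \<notin> B \<and> V z < V (z + t *\<^sub>R G z)"
      using grad_dir[OF \<open>z \<notin> B\<close>, of "G z"] gp by auto
    then show ?thesis using not_lmax_dir[of "G z" \<delta> z] False by blast
  next
    case True
    obtain v where v: "norm v = 1" "(Q z * cnj v) \<bullet> v = 1 * norm (Q z)" using dir_Q by blast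
    have "(L z v) \<bullet> v = P z * (norm v)^2 + norm (Q z)" using v by (simp add: L_quad)
    moreover have "P z * (norm v)^2 > 0" using P_ge1[of z] v by simp
    ultimately have "(L z v) \<bullet> v > 0" by (simp add: add_pos_nonneg)
    then obtain \<delta> where "\<delta> > 0" "\<forall>t. 0 < t \<and> t < \<delta> \<longrightarrow> z + t *\<^sub>R v \<notin> B \<and> V z < V (z + t *\<^sub>R v)"
      using dir_pos[OF \<open>z \<notin> B\<close> True] by blast
    then show ?thesis using not_lmax_dir[of v \<delta> z] v by (metis norm_zero zero_neq_one)
  qed
qed

lemma lmin_crit: "lmin z \<Longrightarrow> G z = 0"
proof (rule ccontr)
  assume l: "lmin z" and g: "G z \<noteq> 0"
  have z: "z \<notin> B" using l by (simp add: lmin_def)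
  have gp: "G z \<bullet> (- G z) < 0" using g by simp
  obtain \<delta> where "\<delta> > 0" "\<forall>t. 0 < t \<and> t < \<delta> \<longrightarrow> z + t *\<^sub>R (- G z) \<notin> B \<and> V (z + t *\<^sub>R (- G z)) < V z"
    using grad_dir[OF z, of "- G z"] gp by (metis less_asym less_irrefl)
  then show False using not_lmin_dir[of "- G z" \<delta> z] g l by auto
qed

lemma saddle_not_lmin:
  assumes z: "z \<notin> B" "G z = 0" and pq: "P z < norm (Q z)"
  shows "\<not> lmin z"
proof -
  obtain v where v: "norm v = 1" "(Q z * cnj v) \<bullet> v = (-1) * norm (Q z)" using dir_Q by blast
  have "(L z v) \<bullet> v = P z - norm (Q z)"
    using v by (simp add: L_quad)
  then have "(L z v) \<bullet> v < 0" using pq by simp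
  then obtain \<delta> where "\<delta> > 0" "\<forall>t. 0 < t \<and> t < \<delta> \<longrightarrow> z + t *\<^sub>R v \<notin> B \<and> V (z + t *\<^sub>R v) < V z"
    using dir_neg[OF z] by blast
  then show ?thesis using not_lmin_dir[of v \<delta> z] v by (metis norm_zero zero_neq_one)
qed

lemma min_lmin:
  assumes z: "z \<notin> B" "G z = 0" and pq: "P z > norm (Q z)"
  shows "lmin z"
proof -
  define \<kappa> where "\<kappa> = P z - norm (Q z)"
  have k: "\<kappa> > 0" using pq by (simp add: \<kappa>_def)
  obtain d where d: "d > 0" "\<forall>y. norm (y - z) < d \<longrightarrow> y \<notin> B \<and> norm (G y - G z - L z (y - z)) \<le> (\<kappa>/2) * norm (y - z)"
    using G_approx[OF z(1), of "\<kappa>/2"] k by auto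
  have "V z \<le> V y" if y: "norm (y - z) < d" for y
  proof (cases "y = z")
    case True then show ?thesis by simp
  next
    case False
    define v where "v = y - z"
    have v0: "v \<noteq> 0" using False by (simp add: v_def)
    have inb: "norm (z + s *\<^sub>R v - z) < d" if "0 \<le> s" "s \<le> 1" for s
    proof -
      have "norm (z + s *\<^sub>R v - z) = s * norm v" using that by simp
      also have "\<dots> \<le> norm v" using that by (simp add: mult_left_le_one_le)
      finally show ?thesis using y v_def by simp
    qed
    obtain \<theta> where th: "0 < \<theta>" "\<theta> < 1" "V (z + 1 *\<^sub>R v) - V z = 1 * (G (z + \<theta> *\<^sub>R v) \<bullet> v)"
      using mvt_line[of 1 z v] d inb by force
    have est: "\<bar>G (z + \<theta> *\<^sub>R v) \<bullet> v - \<theta> * ((L z v) \<bullet> v)\<bar> \<le> (\<kappa>/2) * \<theta> * (norm v)^2"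
    proof (rule G_line_est)
      have "norm (z + \<theta> *\<^sub>R v - z) < d" using inb th by simp
      then show "norm (G (z + \<theta> *\<^sub>R v) - G z - L z (z + \<theta> *\<^sub>R v - z)) \<le> (\<kappa>/2) * norm (z + \<theta> *\<^sub>R v - z)"
        using d by blast
    qed (use th z in auto)
    have "(L z v) \<bullet> v \<ge> \<kappa> * (norm v)^2"
      using Q_quad_bound[of z v] by (simp add: L_quad \<kappa>_def algebra_simps abs_le_iff)
    then have "\<theta> * ((L z v) \<bullet> v) \<ge> \<theta> * (\<kappa> * (norm v)^2)" using th by (simp add: mult_left_mono)
    moreover have "(\<kappa>/2) * \<theta> * (norm v)^2 \<le> \<theta> * (\<kappa> * (norm v)^2)" using k th by (simp add: mult_left_mono)
    ultimately have "G (z + \<theta> *\<^sub>R v) \<bullet> v \<ge> 0" using est unfolding abs_le_iff by linarith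
    then show ?thesis using th by (simp add: v_def)
  qed
  then show ?thesis unfolding lmin_def using z d by (auto simp: dist_norm intro!: exI[of _ d])
qed

end


lemma homotopic_loops_image:
  assumes "homotopic_loops S p q" "continuous_on S f" "f ` S \<subseteq> T"
  shows "homotopic_loops T (f \<circ> p) (f \<circ> q)"
proof -
  have "homotopic_with_canon (\<lambda>r. pathfinish (f \<circ> r) = pathstart (f \<circ> r)) {0..1} S p q"
    using assms(1) unfolding homotopic_loops_def
    by (rule homotopic_with_mono) (simp add: pathfinish_def pathstart_def)
  from homotopic_with_compose_continuous_left[OF this assms(2)] assms(3)
  show ?thesis unfolding homotopic_loops_def by (auto simp: Pi_iff)
qed

lemma homotopic_paths_image:
  assumes "homotopic_paths S p q" "continuous_on S f" "f ` S \<subseteq> T"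
  shows "homotopic_paths T (f \<circ> p) (f \<circ> q)"
proof -
  have h1: "homotopic_with_canon (\<lambda>r. pathstart (f \<circ> r) = pathstart (f \<circ> p) \<and> pathfinish (f \<circ> r) = pathfinish (f \<circ> p)) {0..1} S p q"
    using assms(1) unfolding homotopic_paths_def
    by (rule homotopic_with_mono) (simp add: pathfinish_def pathstart_def)
  have "homotopic_with_canon (\<lambda>r. pathstart r = pathstart (f \<circ> p) \<and> pathfinish r = pathfinish (f \<circ> p)) {0..1} T (f \<circ> p) (f \<circ> q)"
    by (rule homotopic_with_compose_continuous_left[OF h1 assms(2)]) (use assms(3) in auto)
  then show ?thesis unfolding homotopic_paths_def .
qed

lemma inner_pos_segment:
  fixes a b :: complex
  assumes "a \<bullet> b > 0"
  shows "0 \<notin> closed_segment a b"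
proof
  assume "0 \<in> closed_segment a b"
  then obtain u where u: "0 \<le> u" "u \<le> 1" "0 = (1 - u) *\<^sub>R a + u *\<^sub>R b"
    unfolding closed_segment_def by auto
  then have "0 = ((1 - u) *\<^sub>R a + u *\<^sub>R b) \<bullet> b" by simp
  also have "\<dots> = (1 - u) * (a \<bullet> b) + u * (b \<bullet> b)" by (simp add: inner_add_left)
  finally have e: "(1 - u) * (a \<bullet> b) + u * (b \<bullet> b) = 0" by simp
  have "b \<bullet> b \<ge> 0" by simp
  moreover have "b \<noteq> 0" using assms by auto
  then have "b \<bullet> b > 0" by simp
  ultimately show False using e u assms
    by (smt (verit) mult_nonneg_nonneg mult_pos_pos)
qed

lemma winding_mult_const:
  assumes "path g" "pathfinish g = pathstart g" "0 \<notin> path_image g" "q \<noteq> 0"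
  shows "winding_number (\<lambda>t. q * g t) 0 = winding_number g 0"
proof -
  have "homotopic_loops (-{0}) g (\<lambda>t. q * g t)"
    unfolding homotopic_loops
  proof (intro exI[of _ "\<lambda>(s,t). exp (of_real s * Ln q) * g t"] conjI ballI)
    show "continuous_on ({0..1} \<times> {0..1}) (\<lambda>(s,t). exp (of_real s * Ln q) * g t)"
      using assms(1) unfolding path_def
      by (auto intro!: continuous_intros continuous_on_compose2[of "{0..1}" g] simp: case_prod_unfold)
    show "(\<lambda>(s,t). exp (of_real s * Ln q) * g t) \<in> {0..1} \<times> {0..1} \<rightarrow> - {0}"
      using assms(3) by (auto simp: path_image_def)
    show "\<And>t. t \<in> {0..1} \<Longrightarrow> pathfinish ((\<lambda>(s,t). exp (of_real s * Ln q) * g t) \<circ> Pair t) =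
          pathstart ((\<lambda>(s,t). exp (of_real s * Ln q) * g t) \<circ> Pair t)"
      using assms(2) by (simp add: pathfinish_def pathstart_def)
  qed (use assms(4) in auto)
  then show ?thesis using winding_number_homotopic_loops by metis
qed


context sat begin

definition "Z = {z. z \<notin> B \<and> G z = 0}"

lemma G_cont: "continuous_on (- B) G"
  using G_deriv by (intro continuous_at_imp_continuous_on) (auto dest: has_derivative_continuous)

lemma V_cont: "continuous_on (- B) V"
  using V_deriv by (intro continuous_at_imp_continuous_on) (auto dest: has_derivative_continuous)

lemma G_contAt: "z \<notin> B \<Longrightarrow> isCont G z"
  using G_deriv has_derivative_continuous by blast

definition "Msum = (\<Sum>j<n. m j)"
definition "Ksum = (\<Sum>j<n. norm (b j))"
definition "R1 = 1 + Msum + Ksum"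

lemma Msum_nonneg: "Msum \<ge> 0" unfolding Msum_def using mpos by (intro sum_nonneg) (auto simp: less_imp_le)
lemma norm_b_le: "j < n \<Longrightarrow> norm (b j) \<le> Ksum"
  unfolding Ksum_def by (rule member_le_sum) auto

lemma G_far:
  assumes "norm z \<ge> R1"
  shows "z \<notin> B \<and> G z \<bullet> z > 0"
proof -
  have rj: "norm (z - b j) \<ge> 1 + Msum" if "j < n" for j
    using norm_triangle_ineq2[of z "b j"] norm_b_le[OF that] assms unfolding R1_def by linarith
  have zB: "z \<notin> B" using rj Msum_nonneg unfolding B_def by force
  have tm: "(m j * norm (z - b j) powr (-(\<alpha>+1))) * ((z - b j) \<bullet> z) \<le> m j * norm z" if j: "j < n" for j
  proof -
    define r where "r = norm (z - b j)"
    have r1: "r \<ge> 1" using rj[OF j] Msum_nonneg unfolding r_def by linarith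
    have "(z - b j) \<bullet> z \<le> r * norm z" unfolding r_def using Cauchy_Schwarz_ineq2[of "z - b j" z] by linarith
    then have "r powr (-(\<alpha>+1)) * ((z - b j) \<bullet> z) \<le> r powr (-(\<alpha>+1)) * (r * norm z)" by (simp add: mult_left_mono)
    also have "\<dots> = norm z / r powr \<alpha>" using powr_neg_succ[of r] r1 by simp
    also have "\<dots> \<le> norm z / 1" using ge_one_powr_ge_zero[OF r1, of \<alpha>] alpha
      by (intro divide_left_mono) auto
    finally have X: "r powr (-(\<alpha>+1)) * ((z - b j) \<bullet> z) \<le> norm z" by simp
    then have "m j * (r powr (-(\<alpha>+1)) * ((z - b j) \<bullet> z)) \<le> m j * norm z"
      using mpos[OF j] by (simp add: mult_left_mono)
    then show ?thesis by (simp add: r_def mult.assoc)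
  qed
  have "G z \<bullet> z = (norm z)^2 - (\<Sum>j<n. (m j * norm (z - b j) powr (-(\<alpha>+1))) * ((z - b j) \<bullet> z))"
    unfolding G_def by (simp add: inner_diff_left inner_sum_left power2_norm_eq_inner)
  also have "\<dots> \<ge> (norm z)^2 - Msum * norm z"
  proof -
    have "(\<Sum>j<n. (m j * norm (z - b j) powr (-(\<alpha>+1))) * ((z - b j) \<bullet> z)) \<le> (\<Sum>j<n. m j * norm z)"
      by (rule sum_mono) (use tm in auto)
    then show ?thesis unfolding Msum_def sum_distrib_right by simp
  qed
  finally have "G z \<bullet> z \<ge> norm z * (norm z - Msum)" by (simp add: power2_eq_square algebra_simps)
  moreover have "norm z - Msum > 0" "norm z > 0" using assms R1_def Ksum_def Msum_nonneg
    by (smt (verit) norm_ge_zero sum_nonneg)+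
  ultimately show ?thesis using zB by (smt (verit) mult_pos_pos)
qed

lemma powr_sq_aux: "r > 0 \<Longrightarrow> r powr (-(\<alpha>+1)) * r^2 = r powr (1 - \<alpha>)"
proof -
  assume r: "r > 0"
  have "r powr (1 - \<alpha>) = r powr (-(\<alpha>+1)) * r powr 1 * r powr 1"
    by (simp only: powr_add[symmetric]) (simp add: algebra_simps)
  moreover have "r powr 1 = r" using r by simp
  ultimately show ?thesis by (simp add: power2_eq_square mult.assoc)
qed

lemma G_near:
  assumes j: "j < n"
  shows "\<exists>\<delta>>0. \<forall>z. 0 < norm (z - b j) \<and> norm (z - b j) < \<delta> \<longrightarrow> z \<notin> B \<and> G z \<bullet> (b j - z) > 0"
proof -
  define E where "E z = z - (\<Sum>k\<in>{..<n}-{j}. (m k * norm (z - b k) powr (-(\<alpha>+1))) *\<^sub>R (z - b k))" for z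
  have GE: "G z = E z - (m j * norm (z - b j) powr (-(\<alpha>+1))) *\<^sub>R (z - b j)" for z
    unfolding G_def E_def using sum.remove[of "{..<n}" j "\<lambda>k. (m k * norm (z - b k) powr (-(\<alpha>+1))) *\<^sub>R (z - b k)"] j
    by (simp add: algebra_simps)
  have bne: "b k \<noteq> b j" if "k \<in> {..<n} - {j}" for k
    using binj j that by (auto dest: inj_onD)
  have cE: "isCont E (b j)"
    unfolding E_def using bne by (intro continuous_intros) (auto simp: eq_commute[of "b j"])
  obtain d0 where d0: "d0 > 0" "\<forall>z. dist z (b j) < d0 \<longrightarrow> dist (E z) (E (b j)) < 1"
    using cE unfolding continuous_at_eps_delta by (meson zero_less_one)
  define C where "C = norm (E (b j)) + 1"
  have C: "C \<ge> 1" unfolding C_def by simp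
  have "open (- (B - {b j}))" using finite_B by (intro open_Compl finite_imp_closed) auto
  moreover have "b j \<in> - (B - {b j})" by simp
  ultimately obtain d1 where d1: "d1 > 0" "ball (b j) d1 \<subseteq> - (B - {b j})" using open_contains_ball by blast
  define \<delta> where "\<delta> = min (min d0 d1) (min 1 (m j / C))"
  have mj: "m j > 0" using mpos j by simp
  have dpos: "\<delta> > 0" using d0 d1 C mj by (simp add: \<delta>_def)
  have "z \<notin> B \<and> G z \<bullet> (b j - z) > 0" if z: "0 < norm (z - b j)" "norm (z - b j) < \<delta>" for z
  proof
    define r where "r = norm (z - b j)"
    have r: "0 < r" "r < d0" "r < d1" "r < 1" "r < m j / C" using z unfolding r_def \<delta>_def by auto
    show "z \<notin> B"
    proof
      assume "z \<in> B"
      moreover have "z \<in> ball (b j) d1" using r by (simp add: r_def dist_norm norm_minus_commute)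
      ultimately show False using d1 z by auto
    qed
    have Ez: "norm (E z) \<le> C"
    proof -
      have "dist (E z) (E (b j)) < 1" using d0 r by (simp add: r_def dist_norm)
      then show ?thesis unfolding C_def dist_norm using norm_triangle_ineq2[of "E z" "E (b j)"] by linarith
    qed
    have eq1: "G z \<bullet> (b j - z) = - (E z \<bullet> (z - b j)) + m j * (r powr (-(\<alpha>+1)) * r^2)"
      unfolding GE by (simp add: inner_diff_left inner_diff_right r_def power2_norm_eq_inner algebra_simps)
    have eq2: "r powr (-(\<alpha>+1)) * r^2 = r powr (1 - \<alpha>)" using powr_sq_aux r by simp
    have "r powr (1 - \<alpha>) \<ge> r powr 0" using r alpha by (intro powr_mono') auto
    then have "r powr (1 - \<alpha>) \<ge> 1" using r by simp
    moreover have "E z \<bullet> (z - b j) \<le> C * r"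
    proof -
      have "E z \<bullet> (z - b j) \<le> norm (E z) * r" using Cauchy_Schwarz_ineq2[of "E z" "z - b j"] unfolding r_def by linarith
      also have "\<dots> \<le> C * r" using Ez r by (simp add: mult_right_mono)
      finally show ?thesis .
    qed
    moreover have "C * r < m j" using r C by (simp add: pos_less_divide_eq mult.commute)
    ultimately show "G z \<bullet> (b j - z) > 0"
      using mj unfolding eq1 eq2 by (smt (verit) mult_le_cancel_left1)
  qed
  then show ?thesis using dpos by blast
qed

lemma L_lower: "norm (L z w) \<ge> \<bar>P z - norm (Q z)\<bar> * norm w"
proof -
  have p: "P z > 0" using P_ge1[of z] by simp
  have n1: "norm (of_real (P z) * w) = P z * norm w" using p by (simp add: norm_mult)
  have n2: "norm (Q z * cnj w) = norm (Q z) * norm w" by (simp add: norm_mult)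
  have "norm (L z w) \<ge> P z * norm w - norm (Q z) * norm w"
    using norm_triangle_ineq2[of "of_real (P z) * w" "- (Q z * cnj w)"] n1 n2 unfolding L_def by simp
  moreover have "norm (L z w) \<ge> norm (Q z) * norm w - P z * norm w"
    using norm_triangle_ineq2[of "Q z * cnj w" "- (of_real (P z) * w)"] n1 n2 unfolding L_def
    by (simp add: add.commute)
  ultimately show ?thesis by (simp add: abs_if left_diff_distrib)
qed

lemma Z_isolated:
  assumes "z \<in> Z" "P z \<noteq> norm (Q z)"
  shows "\<exists>e>0. \<forall>y. 0 < norm (y - z) \<and> norm (y - z) < e \<longrightarrow> y \<notin> B \<and> G y \<noteq> 0"
proof -
  define \<kappa> where "\<kappa> = \<bar>P z - norm (Q z)\<bar>"
  have k: "\<kappa> > 0" using assms by (simp add: \<kappa>_def)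
  have z: "z \<notin> B" "G z = 0" using assms by (auto simp: Z_def)
  obtain d where d: "d > 0" "\<forall>y. norm (y - z) < d \<longrightarrow> y \<notin> B \<and> norm (G y - G z - L z (y - z)) \<le> (\<kappa>/2) * norm (y - z)"
    using G_approx[OF z(1), of "\<kappa>/2"] k by auto
  have "y \<notin> B \<and> G y \<noteq> 0" if y: "0 < norm (y - z)" "norm (y - z) < d" for y
  proof
    show "y \<notin> B" using d y by blast
    have e: "norm (G y - L z (y - z)) \<le> (\<kappa>/2) * norm (y - z)" using d y z by auto
    have "norm (L z (y - z)) \<ge> \<kappa> * norm (y - z)" using L_lower unfolding \<kappa>_def by blast
    then have "norm (G y) \<ge> \<kappa> * norm (y - z) - (\<kappa>/2) * norm (y - z)"
      using e norm_triangle_ineq2[of "L z (y - z)" "G y"] by (simp add: norm_minus_commute)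
    moreover have "\<kappa> * norm (y - z) - (\<kappa>/2) * norm (y - z) > 0" using k y by simp
    ultimately show "G y \<noteq> 0" by auto
  qed
  then show ?thesis using d by blast
qed

lemma not_limpt_Z:
  assumes nd: "\<forall>z\<in>Z. P z \<noteq> norm (Q z)" and y: "y \<notin> B"
  shows "\<not> y islimpt Z"
proof (cases "y \<in> Z")
  case True
  obtain e where e: "e > 0" "\<forall>x. 0 < norm (x - y) \<and> norm (x - y) < e \<longrightarrow> x \<notin> B \<and> G x \<noteq> 0"
    using Z_isolated[OF True] nd True by blast
  show ?thesis unfolding islimpt_approachable
    using e by (auto simp: Z_def dist_norm intro!: exI[of _ e])
next
  case False
  then have g: "G y \<noteq> 0" using y by (simp add: Z_def)
  obtain e where e: "e > 0" "\<forall>x. dist x y < e \<longrightarrow> dist (G x) (G y) < norm (G y)"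
    using G_contAt[OF y] g unfolding continuous_at_eps_delta by (meson zero_less_norm_iff)
  have "G x \<noteq> 0" if "dist x y < e" for x using e that by fastforce
  then show ?thesis unfolding islimpt_approachable
    using e by (auto simp: Z_def intro!: exI[of _ e])
qed

lemma Z_finite:
  assumes nd: "\<forall>z\<in>Z. P z \<noteq> norm (Q z)"
  shows "finite Z"
proof -
  have "\<forall>j\<in>{..<n}. \<exists>\<delta>>0. \<forall>z. 0 < norm (z - b j) \<and> norm (z - b j) < \<delta> \<longrightarrow> z \<notin> B \<and> G z \<bullet> (b j - z) > 0"
    using G_near by blast
  then obtain \<delta> where \<delta>: "\<forall>j\<in>{..<n}. \<delta> j > 0 \<and> (\<forall>z. 0 < norm (z - b j) \<and> norm (z - b j) < \<delta> j \<longrightarrow> z \<notin> B \<and> G z \<bullet> (b j - z) > 0)"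
    by (metis (no_types, lifting) bchoice)
  define K where "K = cball 0 R1 - (\<Union>j<n. ball (b j) (\<delta> j))"
  have cK: "compact K" unfolding K_def by (intro compact_diff) auto
  have KB: "K \<inter> B = {}" using \<delta> unfolding K_def B_def by force
  have ZK: "Z \<subseteq> K"
  proof
    fix z assume z: "z \<in> Z"
    then have zB: "z \<notin> B" and g: "G z = 0" by (auto simp: Z_def)
    have "norm z \<le> R1" using G_far[of z] g by force
    moreover have "z \<notin> ball (b j) (\<delta> j)" if j: "j < n" for j
    proof
      assume "z \<in> ball (b j) (\<delta> j)"
      then have "norm (z - b j) < \<delta> j" by (simp add: dist_norm norm_minus_commute)
      moreover have "0 < norm (z - b j)" using zB j unfolding B_def by auto
      ultimately have "G z \<bullet> (b j - z) > 0" using \<delta> j by blast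
      then show False using g by simp
    qed
    ultimately show "z \<in> K" unfolding K_def by auto
  qed
  have "finite (K \<inter> Z)"
    by (rule finite_not_islimpt_in_compact[OF cK]) (use not_limpt_Z[OF nd] KB in blast)
  then show ?thesis using ZK by (simp add: Int_absorb1)
qed

end


lemma reversepath_compose: "f \<circ> reversepath g = reversepath (f \<circ> g)"
  by (simp add: reversepath_def o_def)

context sat begin

definition "Sp = B \<union> Z"
definition "F x y = winding_number (G \<circ> linepath x y) 0"
definition "W u w = winding_number (G \<circ> rectpath u w) 0"
definition "ind c = (if c \<in> B then 1 else if P c > norm (Q c) then 1 else (-1::complex))"

lemma G_ok: "y \<notin> Sp \<Longrightarrow> y \<notin> B \<and> G y \<noteq> 0"
  by (auto simp: Sp_def Z_def)

lemma path_G: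
  assumes "path g" "path_image g \<inter> Sp = {}"
  shows "path (G \<circ> g)" "0 \<notin> path_image (G \<circ> g)"
proof -
  have "path_image g \<subseteq> - B" using assms(2) by (auto simp: Sp_def)
  then show "path (G \<circ> g)" using assms(1) G_cont unfolding path_def path_image_def
    by (intro continuous_on_compose) (auto intro: continuous_on_subset)
  show "0 \<notin> path_image (G \<circ> g)" using assms(2) G_ok by (force simp: path_image_compose)
qed

lemma seg_ok:
  assumes "closed_segment x y \<inter> Sp = {}"
  shows "path (G \<circ> linepath x y)" "0 \<notin> path_image (G \<circ> linepath x y)"
  using path_G[of "linepath x y"] assms by auto

lemma G_cont_on: "S \<inter> Sp = {} \<Longrightarrow> continuous_on S G"
  using G_cont by (rule continuous_on_subset) (auto simp: Sp_def)

lemma G_img: "S \<inter> Sp = {} \<Longrightarrow> G ` S \<subseteq> - {0}"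
  using G_ok by force

lemma F_split:
  assumes y: "y \<in> closed_segment x z" and S: "closed_segment x z \<inter> Sp = {}"
  shows "F x z = F x y + F y z"
proof -
  have sub1: "closed_segment x y \<subseteq> closed_segment x z" and sub2: "closed_segment y z \<subseteq> closed_segment x z"
    using y by (meson convex_closed_segment convex_contains_segment ends_in_segment)+
  have "homotopic_paths (closed_segment x z) (linepath x z) (linepath x y +++ linepath y z)"
  proof (rule homotopic_paths_linear)
    fix t :: real assume t: "t \<in> {0..1}"
    have "linepath x z t \<in> closed_segment x z" using t by (metis linepath_in_path)
    moreover have "(linepath x y +++ linepath y z) t \<in> closed_segment x z"
      using t sub1 sub2 path_image_join[of "linepath x y" "linepath y z"]
      by (metis (no_types, lifting) Un_subset_iff path_image_linepath path_image_def image_subset_iff pathfinish_linepath pathstart_linepath)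
    ultimately show "closed_segment (linepath x z t) ((linepath x y +++ linepath y z) t) \<subseteq> closed_segment x z"
      by (meson convex_closed_segment convex_contains_segment)
  qed auto
  from homotopic_paths_image[OF this G_cont_on[OF S] G_img[OF S]]
  have "F x z = winding_number (G \<circ> (linepath x y +++ linepath y z)) 0"
    unfolding F_def by (rule winding_number_homotopic_paths)
  also have "\<dots> = F x y + F y z"
  proof -
    have a: "closed_segment x y \<inter> Sp = {}" "closed_segment y z \<inter> Sp = {}" using sub1 sub2 S by blast+
    show ?thesis unfolding F_def path_compose_join using seg_ok[OF a(1)] seg_ok[OF a(2)]
      by (intro winding_number_join) (auto simp: pathfinish_compose pathstart_compose)
  qed
  finally show ?thesis .
qed

lemma F_rev:
  assumes S: "closed_segment x y \<inter> Sp = {}"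
  shows "F y x = - F x y"
proof -
  have "G \<circ> linepath y x = reversepath (G \<circ> linepath x y)"
    by (metis reversepath_compose reversepath_linepath)
  then show ?thesis unfolding F_def using winding_number_reversepath seg_ok[OF S] by metis
qed

lemma rect_segs:
  fixes u w :: complex
  defines "a2 \<equiv> Complex (Re w) (Im u)" and "a4 \<equiv> Complex (Re u) (Im w)"
  shows "closed_segment u a2 \<union> closed_segment a2 w \<union> closed_segment w a4 \<union> closed_segment a4 u = path_image (rectpath u w)"
  unfolding rectpath_def Let_def a2_def a4_def by (simp add: path_image_join Un_assoc)

lemma W_decomp:
  fixes u w :: complex
  defines "a2 \<equiv> Complex (Re w) (Im u)" and "a4 \<equiv> Complex (Re u) (Im w)"
  assumes S: "path_image (rectpath u w) \<inter> Sp = {}"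
  shows "W u w = F u a2 + F a2 w + F w a4 + F a4 u"
proof -
  have s: "closed_segment u a2 \<inter> Sp = {}" "closed_segment a2 w \<inter> Sp = {}"
      "closed_segment w a4 \<inter> Sp = {}" "closed_segment a4 u \<inter> Sp = {}"
    using S rect_segs[of u w] unfolding a2_def a4_def by blast+
  note ok = seg_ok[OF s(1)] seg_ok[OF s(2)] seg_ok[OF s(3)] seg_ok[OF s(4)]
  have "W u w = winding_number ((G \<circ> linepath u a2) +++ (G \<circ> linepath a2 w) +++ (G \<circ> linepath w a4) +++ (G \<circ> linepath a4 u)) 0"
    unfolding W_def rectpath_def Let_def a2_def a4_def path_compose_join by simp
  also have "\<dots> = F u a2 + F a2 w + F w a4 + F a4 u"
  proof -
    let ?A = "G \<circ> linepath u a2" and ?B = "G \<circ> linepath a2 w" and ?C = "G \<circ> linepath w a4" and ?D = "G \<circ> linepath a4 u"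
    have j3: "winding_number (?C +++ ?D) 0 = winding_number ?C 0 + winding_number ?D 0"
      using ok by (intro winding_number_join) (auto simp: pathfinish_compose pathstart_compose)
    have p3: "path (?C +++ ?D)" "0 \<notin> path_image (?C +++ ?D)"
      using ok by (auto simp: pathfinish_compose pathstart_compose not_in_path_image_join)
    have j2: "winding_number (?B +++ ?C +++ ?D) 0 = winding_number ?B 0 + winding_number (?C +++ ?D) 0"
      using ok p3 by (intro winding_number_join) (auto simp: pathfinish_compose pathstart_compose)
    have p2: "path (?B +++ ?C +++ ?D)" "0 \<notin> path_image (?B +++ ?C +++ ?D)"
      using ok p3 by (auto simp: pathfinish_compose pathstart_compose not_in_path_image_join)
    have j1: "winding_number (?A +++ ?B +++ ?C +++ ?D) 0 = winding_number ?A 0 + winding_number (?B +++ ?C +++ ?D) 0"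
      using ok p2 by (intro winding_number_join) (auto simp: pathfinish_compose pathstart_compose)
    show ?thesis unfolding F_def j1 j2 j3 by (simp add: add.assoc)
  qed
  finally show ?thesis .
qed

lemma rect_bd:
  assumes "cbox u w \<inter> Sp \<subseteq> box u w" "Re u \<le> Re w" "Im u \<le> Im w"
  shows "path_image (rectpath u w) \<inter> Sp = {}"
  using assms path_image_rectpath_cbox_minus_box[OF assms(2,3)] by blast

lemma seg_bd:
  assumes "cbox u w \<inter> Sp \<subseteq> box u w" "Re u \<le> Re w" "Im u \<le> Im w"
  shows "closed_segment u (Complex (Re w) (Im u)) \<inter> Sp = {}"
    "closed_segment (Complex (Re w) (Im u)) w \<inter> Sp = {}"
    "closed_segment w (Complex (Re u) (Im w)) \<inter> Sp = {}"
    "closed_segment (Complex (Re u) (Im w)) u \<inter> Sp = {}"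
  using rect_bd[OF assms] rect_segs[of u w] by blast+

lemma split_vert:
  assumes lt: "Re u < t" "t < Re w" "Im u < Im w"
    and bd: "cbox u w \<inter> Sp \<subseteq> box u w" and line: "\<forall>z\<in>Sp. Re z \<noteq> t"
  shows "W u w = W u (Complex t (Im w)) + W (Complex t (Im u)) w"
    "cbox u (Complex t (Im w)) \<inter> Sp \<subseteq> box u (Complex t (Im w))"
    "cbox (Complex t (Im u)) w \<inter> Sp \<subseteq> box (Complex t (Im u)) w"
proof -
  define p q a2 a4 where "p = Complex t (Im u)" and "q = Complex t (Im w)"
    and "a2 = Complex (Re w) (Im u)" and "a4 = Complex (Re u) (Im w)"
  show bL: "cbox u (Complex t (Im w)) \<inter> Sp \<subseteq> box u (Complex t (Im w))"
  proof (intro subsetI)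
    fix z assume z: "z \<in> cbox u (Complex t (Im w)) \<inter> Sp"
    then have c: "Re (u) \<le> Re z" "Re z \<le> Re ((Complex t (Im w)))" "Im (u) \<le> Im z" "Im z \<le> Im ((Complex t (Im w)))"
      by (auto simp: in_cbox_complex_iff)
    then have "z \<in> cbox u w" using lt by (auto simp: in_cbox_complex_iff)
    then have "z \<in> box u w" using bd z by blast
    then have "Re u < Re z" "Re z < Re w" "Im u < Im z" "Im z < Im w" by (auto simp: in_box_complex_iff)
    moreover have "Re z \<noteq> t" using line z by blast
    ultimately show "z \<in> box u (Complex t (Im w))" using c by (auto simp: in_box_complex_iff)
  qed
  show bR: "cbox (Complex t (Im u)) w \<inter> Sp \<subseteq> box (Complex t (Im u)) w"
  proof (intro subsetI)
    fix z assume z: "z \<in> cbox (Complex t (Im u)) w \<inter> Sp"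
    then have c: "Re ((Complex t (Im u))) \<le> Re z" "Re z \<le> Re (w)" "Im ((Complex t (Im u))) \<le> Im z" "Im z \<le> Im (w)"
      by (auto simp: in_cbox_complex_iff)
    then have "z \<in> cbox u w" using lt by (auto simp: in_cbox_complex_iff)
    then have "z \<in> box u w" using bd z by blast
    then have "Re u < Re z" "Re z < Re w" "Im u < Im z" "Im z < Im w" by (auto simp: in_box_complex_iff)
    moreover have "Re z \<noteq> t" using line z by blast
    ultimately show "z \<in> box (Complex t (Im u)) w" using c by (auto simp: in_box_complex_iff)
  qed
  have WL: "W u q = F u p + F p q + F q a4 + F a4 u"
    using W_decomp[OF rect_bd[OF bL]] lt by (simp add: p_def q_def a4_def)
  have WR: "W p w = F p a2 + F a2 w + F w q + F q p"
    using W_decomp[OF rect_bd[OF bR]] lt by (simp add: p_def q_def a2_def)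
  have WW: "W u w = F u a2 + F a2 w + F w a4 + F a4 u"
    using W_decomp[OF rect_bd[OF bd]] lt by (simp add: a2_def a4_def)
  note sb = seg_bd[OF bd] 
  have s1: "F u a2 = F u p + F p a2"
    by (rule F_split) (use sb lt in \<open>auto simp: p_def a2_def closed_segment_same_Im closed_segment_eq_real_ivl\<close>)
  have s2: "F w a4 = F w q + F q a4"
    by (rule F_split) (use sb lt in \<open>auto simp: q_def a4_def closed_segment_same_Im closed_segment_eq_real_ivl\<close>)
  have "closed_segment p q \<inter> Sp = {}"
    using line lt by (auto simp: p_def q_def closed_segment_same_Re)
  then have s3: "F q p = - F p q" by (rule F_rev)
  show "W u w = W u (Complex t (Im w)) + W (Complex t (Im u)) w"
    unfolding p_def[symmetric] q_def[symmetric] WL WR WW s1 s2 s3 by (simp add: algebra_simps)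
qed

lemma split_horiz:
  assumes lt: "Im u < t" "t < Im w" "Re u < Re w"
    and bd: "cbox u w \<inter> Sp \<subseteq> box u w" and line: "\<forall>z\<in>Sp. Im z \<noteq> t"
  shows "W u w = W u (Complex (Re w) t) + W (Complex (Re u) t) w"
    "cbox u (Complex (Re w) t) \<inter> Sp \<subseteq> box u (Complex (Re w) t)"
    "cbox (Complex (Re u) t) w \<inter> Sp \<subseteq> box (Complex (Re u) t) w"
proof -
  define p q a2 a4 where "p = Complex (Re w) t" and "q = Complex (Re u) t"
    and "a2 = Complex (Re w) (Im u)" and "a4 = Complex (Re u) (Im w)"
  show bL: "cbox u (Complex (Re w) t) \<inter> Sp \<subseteq> box u (Complex (Re w) t)"
  proof (intro subsetI)
    fix z assume z: "z \<in> cbox u (Complex (Re w) t) \<inter> Sp"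
    then have c: "Re (u) \<le> Re z" "Re z \<le> Re ((Complex (Re w) t))" "Im (u) \<le> Im z" "Im z \<le> Im ((Complex (Re w) t))"
      by (auto simp: in_cbox_complex_iff)
    then have "z \<in> cbox u w" using lt by (auto simp: in_cbox_complex_iff)
    then have "z \<in> box u w" using bd z by blast
    then have "Re u < Re z" "Re z < Re w" "Im u < Im z" "Im z < Im w" by (auto simp: in_box_complex_iff)
    moreover have "Im z \<noteq> t" using line z by blast
    ultimately show "z \<in> box u (Complex (Re w) t)" using c by (auto simp: in_box_complex_iff)
  qed
  show bR: "cbox (Complex (Re u) t) w \<inter> Sp \<subseteq> box (Complex (Re u) t) w"
  proof (intro subsetI)
    fix z assume z: "z \<in> cbox (Complex (Re u) t) w \<inter> Sp"
    then have c: "Re ((Complex (Re u) t)) \<le> Re z" "Re z \<le> Re (w)" "Im ((Complex (Re u) t)) \<le> Im z" "Im z \<le> Im (w)"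
      by (auto simp: in_cbox_complex_iff)
    then have "z \<in> cbox u w" using lt by (auto simp: in_cbox_complex_iff)
    then have "z \<in> box u w" using bd z by blast
    then have "Re u < Re z" "Re z < Re w" "Im u < Im z" "Im z < Im w" by (auto simp: in_box_complex_iff)
    moreover have "Im z \<noteq> t" using line z by blast
    ultimately show "z \<in> box (Complex (Re u) t) w" using c by (auto simp: in_box_complex_iff)
  qed
  have WL: "W u p = F u a2 + F a2 p + F p q + F q u"
    using W_decomp[OF rect_bd[OF bL]] lt by (simp add: p_def q_def a2_def)
  have WR: "W q w = F q p + F p w + F w a4 + F a4 q"
    using W_decomp[OF rect_bd[OF bR]] lt by (simp add: p_def q_def a4_def)
  have WW: "W u w = F u a2 + F a2 w + F w a4 + F a4 u"
    using W_decomp[OF rect_bd[OF bd]] lt by (simp add: a2_def a4_def)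
  note sb = seg_bd[OF bd] 
  have s1: "F a2 w = F a2 p + F p w"
    by (rule F_split) (use sb lt in \<open>auto simp: p_def a2_def closed_segment_same_Re closed_segment_eq_real_ivl\<close>)
  have s2: "F a4 u = F a4 q + F q u"
    by (rule F_split) (use sb lt in \<open>auto simp: q_def a4_def closed_segment_same_Re closed_segment_eq_real_ivl\<close>)
  have "closed_segment p q \<inter> Sp = {}"
    using line lt by (auto simp: p_def q_def closed_segment_same_Im)
  then have s3: "F q p = - F p q" by (rule F_rev)
  show "W u w = W u (Complex (Re w) t) + W (Complex (Re u) t) w"
    unfolding p_def[symmetric] q_def[symmetric] WL WR WW s1 s2 s3 by (simp add: algebra_simps)
qed

end


lemma cbox_dist:
  fixes x y u w :: complex
  assumes "x \<in> cbox u w" "y \<in> cbox u w"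
  shows "norm (x - y) \<le> (Re w - Re u) + (Im w - Im u)"
proof -
  have "norm (x - y) \<le> \<bar>Re (x - y)\<bar> + \<bar>Im (x - y)\<bar>" by (rule cmod_le)
  also have "\<dots> \<le> (Re w - Re u) + (Im w - Im u)"
    using assms by (auto simp: in_cbox_complex_iff abs_le_iff intro!: add_mono)
  finally show ?thesis .
qed

lemma seg_shrink:
  fixes q c :: complex
  assumes "x \<in> closed_segment q (c + s *\<^sub>R (q - c))" "0 < s" "s \<le> 1"
  shows "x \<in> closed_segment c q" "q \<noteq> c \<Longrightarrow> x \<noteq> c"
proof -
  obtain l where l: "0 \<le> l" "l \<le> 1" "x = (1 - l) *\<^sub>R q + l *\<^sub>R (c + s *\<^sub>R (q - c))"
    using assms(1) unfolding closed_segment_def by auto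
  define \<mu> where "\<mu> = 1 - l + l * s"
  have mu: "0 < \<mu>" "\<mu> \<le> 1"
  proof -
    have "l * s \<le> l" using l assms by (simp add: mult_left_le)
    moreover have "l * s \<ge> 0" using l assms by simp
    ultimately show "\<mu> \<le> 1" "0 < \<mu>" unfolding \<mu>_def using l assms
      by (auto, smt (verit) mult_pos_pos)
  qed
  have x: "x = (1 - \<mu>) *\<^sub>R c + \<mu> *\<^sub>R q"
    unfolding l(3) \<mu>_def by (simp add: algebra_simps scaleR_conv_of_real)
  show "x \<in> closed_segment c q" unfolding closed_segment_def using mu x by auto
  show "x \<noteq> c" if "q \<noteq> c"
  proof
    assume "x = c"
    then have "\<mu> *\<^sub>R (q - c) = 0" using x by (simp add: algebra_simps)
    then show False using mu that by simp
  qed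
qed

context sat begin

lemma base0:
  assumes "Re u \<le> Re w" "Im u \<le> Im w" "cbox u w \<inter> Sp = {}"
  shows "W u w = 0"
proof -
  have "homotopic_loops (cbox u w) (rectpath u w) (\<lambda>t. u)"
  proof (rule homotopic_loops_linear)
    fix t :: real assume "t \<in> {0..1}"
    then have "rectpath u w t \<in> cbox u w"
      using path_image_rectpath_subset_cbox[OF assms(1,2)] by (auto simp: path_image_def)
    moreover have "u \<in> cbox u w" using assms by (simp add: in_cbox_complex_iff)
    ultimately show "closed_segment (rectpath u w t) u \<subseteq> cbox u w"
      by (meson convex_box convex_contains_segment)
  qed (use pathfinish_rectpath[of u w] pathstart_rectpath[of u w] path_rectpath[of u w] in \<open>auto simp: pathstart_def pathfinish_def path_def continuous_on_const\<close>)
  from homotopic_loops_image[OF this G_cont_on[OF assms(3)] G_img[OF assms(3)]]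
  have "W u w = winding_number (G \<circ> (\<lambda>t. u)) 0" unfolding W_def by (rule winding_number_homotopic_loops)
  also have "\<dots> = 0"
  proof -
    have "u \<in> cbox u w" using assms by (simp add: in_cbox_complex_iff)
    then have "G u \<noteq> 0" using G_ok assms(3) by blast
    then show ?thesis by (simp add: o_def winding_number_zero_const)
  qed
  finally show ?thesis .
qed

definition "\<gamma> u w c s = (\<lambda>t. c + s *\<^sub>R (rectpath u w t - c))"

lemma gamma_props:
  assumes c: "c \<in> box u w" and s: "0 < s" "s \<le> 1" and t: "t \<in> {0..1}"
  shows "\<gamma> u w c s t \<in> cbox u w" "\<gamma> u w c s t \<noteq> c"
    "norm (\<gamma> u w c s t - c) \<le> s * ((Re w - Re u) + (Im w - Im u))"
    "rectpath u w t \<noteq> c" "rectpath u w t \<in> cbox u w"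
proof -
  have le: "Re u \<le> Re w" "Im u \<le> Im w" using c by (auto simp: in_box_complex_iff)
  have q: "rectpath u w t \<in> cbox u w - box u w"
    using t path_image_rectpath_cbox_minus_box[OF le] by (auto simp: path_image_def)
  then show qc: "rectpath u w t \<noteq> c" using c by auto
  show qb: "rectpath u w t \<in> cbox u w" using q by auto
  have cc: "c \<in> cbox u w" using c box_subset_cbox by blast
  have "\<gamma> u w c s t \<in> closed_segment c (rectpath u w t)"
    unfolding \<gamma>_def closed_segment_def using s by (intro CollectI exI[of _ s]) (auto simp: algebra_simps)
  then show "\<gamma> u w c s t \<in> cbox u w" using cc qb by (meson convex_box convex_contains_segment subsetD)
  show "\<gamma> u w c s t \<noteq> c" using qc s by (simp add: \<gamma>_def)
  have "norm (\<gamma> u w c s t - c) = s * norm (rectpath u w t - c)" using s by (simp add: \<gamma>_def)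
  also have "\<dots> \<le> s * ((Re w - Re u) + (Im w - Im u))"
    using cbox_dist[OF qb cc] s by (simp add: mult_left_mono)
  finally show "norm (\<gamma> u w c s t - c) \<le> s * ((Re w - Re u) + (Im w - Im u))" .
qed

lemma path_gamma: "path (\<gamma> u w c s)" "pathfinish (\<gamma> u w c s) = pathstart (\<gamma> u w c s)"
proof -
  show "path (\<gamma> u w c s)" unfolding \<gamma>_def using path_rectpath[of u w] unfolding path_def
    by (intro continuous_intros) auto
  show "pathfinish (\<gamma> u w c s) = pathstart (\<gamma> u w c s)"
    using pathfinish_rectpath[of u w] pathstart_rectpath[of u w]
    by (simp add: \<gamma>_def pathfinish_def pathstart_def)
qed

lemma shrink:
  assumes c: "c \<in> box u w" and one: "cbox u w \<inter> Sp = {c}" and s: "0 < s" "s \<le> 1"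
  shows "W u w = winding_number (G \<circ> \<gamma> u w c s) 0"
proof -
  have le: "Re u \<le> Re w" "Im u \<le> Im w" using c by (auto simp: in_box_complex_iff)
  have "homotopic_loops (cbox u w - {c}) (rectpath u w) (\<gamma> u w c s)"
  proof (rule homotopic_loops_linear)
    fix t :: real assume t: "t \<in> {0..1}"
    have cc: "c \<in> cbox u w" using c box_subset_cbox by blast
    show "closed_segment (rectpath u w t) (\<gamma> u w c s t) \<subseteq> cbox u w - {c}"
    proof
      fix x assume x: "x \<in> closed_segment (rectpath u w t) (\<gamma> u w c s t)"
      have "x \<in> closed_segment c (rectpath u w t)" "x \<noteq> c"
        using seg_shrink[of x "rectpath u w t" c s] x s gamma_props(4)[OF c s t] by (auto simp: \<gamma>_def)
      then show "x \<in> cbox u w - {c}" using cc gamma_props(5)[OF c s t]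
        by (meson DiffI convex_box convex_contains_segment singletonD subsetD)
    qed
  qed (use path_gamma in auto)
  moreover have cs: "(cbox u w - {c}) \<inter> Sp = {}" using one by blast
  ultimately have "homotopic_loops (- {0}) (G \<circ> rectpath u w) (G \<circ> \<gamma> u w c s)"
    using homotopic_loops_image[OF _ G_cont_on[OF cs] G_img[OF cs]] by blast
  then show ?thesis unfolding W_def by (rule winding_number_homotopic_loops)
qed

end

context sat begin

definition "Mc c y = (if c \<in> B then -(y - c) else if P c > norm (Q c) then y - c else Q c * cnj (y - c))"

lemma Mc_cont: "continuous_on UNIV (Mc c)"
  unfolding Mc_def by (cases "c \<in> B"; cases "P c > norm (Q c)") (auto intro!: continuous_intros)

lemma local_model:
  assumes c: "c \<in> Sp" and nd: "c \<in> Z \<Longrightarrow> P c \<noteq> norm (Q c)"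
  shows "\<exists>\<rho>>0. \<forall>y. 0 < norm (y - c) \<and> norm (y - c) < \<rho> \<longrightarrow> G y \<bullet> Mc c y > 0"
proof (cases "c \<in> B")
  case True
  then obtain j where j: "j < n" "c = b j" unfolding B_def by auto
  obtain \<delta> where "\<delta> > 0" "\<forall>z. 0 < norm (z - b j) \<and> norm (z - b j) < \<delta> \<longrightarrow> z \<notin> B \<and> G z \<bullet> (b j - z) > 0"
    using G_near[OF j(1)] by blast
  then show ?thesis using True j by (auto simp: Mc_def intro!: exI[of _ \<delta>])
next
  case False
  then have cZ: "c \<in> Z" using c by (simp add: Sp_def)
  then have z: "c \<notin> B" "G c = 0" by (auto simp: Z_def)
  have pq: "P c \<noteq> norm (Q c)" using nd cZ by simp
  define \<epsilon> where "\<epsilon> = \<bar>P c - norm (Q c)\<bar> / 2"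
  have eps: "\<epsilon> > 0" using pq by (simp add: \<epsilon>_def)
  obtain d where d: "d > 0" "\<forall>y. norm (y - c) < d \<longrightarrow> y \<notin> B \<and> norm (G y - G c - L c (y - c)) \<le> \<epsilon> * norm (y - c)"
    using G_approx[OF z(1) eps] by blast
  have "G y \<bullet> Mc c y > 0" if y: "0 < norm (y - c)" "norm (y - c) < d" for y
  proof -
    define w where "w = y - c"
    define E where "E = G y - L c w"
    have GE: "G y = L c w + E" by (simp add: E_def)
    have En: "norm E \<le> \<epsilon> * norm w" using d y z by (simp add: E_def w_def)
    have w0: "norm w > 0" using y by (simp add: w_def)
    show ?thesis
    proof (cases "P c > norm (Q c)")
      case True
      have M: "Mc c y = w" using True False by (simp add: Mc_def w_def)
      have "(L c w) \<bullet> w \<ge> (P c - norm (Q c)) * (norm w)^2"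
        using Q_quad_bound[of c w] by (simp add: L_quad algebra_simps abs_le_iff)
      moreover have "E \<bullet> w \<ge> - (\<epsilon> * norm w * norm w)"
        using Cauchy_Schwarz_ineq2[of E w] En w0 by (smt (verit) mult_right_mono norm_ge_zero)
      moreover have "\<epsilon> * norm w * norm w < (P c - norm (Q c)) * (norm w)^2"
        using True w0 by (simp add: \<epsilon>_def power2_eq_square)
      ultimately show ?thesis unfolding M GE by (simp add: inner_add_left)
    next
      case nT: False
      then have lt: "P c < norm (Q c)" using pq by simp
      have p0: "P c > 0" using P_ge1[of c] by simp
      have M: "Mc c y = Q c * cnj w" using nT False by (simp add: Mc_def w_def)
      have nq: "norm (Q c * cnj w) = norm (Q c) * norm w" by (simp add: norm_mult)
      have "(of_real (P c) * w) \<bullet> (Q c * cnj w) \<ge> - (P c * norm w * (norm (Q c) * norm w))"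
        using Cauchy_Schwarz_ineq2[of "of_real (P c) * w" "Q c * cnj w"] p0
        by (simp add: norm_mult nq abs_le_iff)
      moreover have "(Q c * cnj w) \<bullet> (Q c * cnj w) = (norm (Q c) * norm w)^2"
        by (simp add: power2_norm_eq_inner[symmetric] nq)
      moreover have "E \<bullet> (Q c * cnj w) \<ge> - (\<epsilon> * norm w * (norm (Q c) * norm w))"
        using Cauchy_Schwarz_ineq2[of E "Q c * cnj w"] En nq
        by (smt (verit) mult_right_mono norm_ge_zero)
      moreover have "\<epsilon> * norm w * (norm (Q c) * norm w) + P c * norm w * (norm (Q c) * norm w) < (norm (Q c) * norm w)^2"
      proof -
        have ee: "\<epsilon> = (norm (Q c) - P c) / 2" using lt by (simp add: \<epsilon>_def)
        have "(\<epsilon> + P c) < norm (Q c)" unfolding ee using lt by (simp add: field_simps)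
        then have "(\<epsilon> + P c) * (norm (Q c) * norm w * norm w) < norm (Q c) * (norm (Q c) * norm w * norm w)"
        proof (rule mult_strict_right_mono)
          have "norm (Q c) > 0" using lt p0 by linarith
          then show "0 < norm (Q c) * norm w * norm w" using w0 by simp
        qed
        then show ?thesis by (simp add: power2_eq_square algebra_simps)
      qed
      ultimately show ?thesis unfolding M GE L_def by (simp add: inner_add_left)
    qed
  qed
  then show ?thesis using d(1) by blast
qed

lemma model_wind:
  assumes c: "c \<in> box u w" and s: "0 < s" "s \<le> 1" and cs: "c \<in> Sp" and nd: "c \<in> Z \<Longrightarrow> P c \<noteq> norm (Q c)"
  shows "winding_number (Mc c \<circ> \<gamma> u w c s) 0 = ind c"
proof -
  define g where "g = (\<lambda>t. rectpath u w t - c)"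
  have pg: "path g" unfolding g_def using path_rectpath[of u w] unfolding path_def by (intro continuous_intros) auto
  have lg: "pathfinish g = pathstart g"
    using pathfinish_rectpath[of u w] pathstart_rectpath[of u w] by (simp add: g_def pathfinish_def pathstart_def)
  have ig: "0 \<notin> path_image g" using gamma_props(4)[OF c s] by (auto simp: g_def path_image_def)
  have wg: "winding_number g 0 = 1"
    using winding_number_rectpath[OF c] winding_number_offset[of "rectpath u w" c] by (simp add: g_def)
  have gam: "\<gamma> u w c s t - c = of_real s * g t" for t by (simp add: \<gamma>_def g_def scaleR_conv_of_real)
  show ?thesis
  proof (cases "c \<in> B")
    case True
    have "Mc c \<circ> \<gamma> u w c s = (\<lambda>t. (- of_real s) * g t)"
      using True by (auto simp: Mc_def gam)
    then show ?thesis using winding_mult_const[OF pg lg ig, of "- of_real s"] s wg True by (simp add: ind_def)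
  next
    case False
    then have cZ: "c \<in> Z" using cs by (simp add: Sp_def)
    show ?thesis
    proof (cases "P c > norm (Q c)")
      case True
      have "Mc c \<circ> \<gamma> u w c s = (\<lambda>t. (of_real s) * g t)"
        using True False by (auto simp: Mc_def gam)
      then show ?thesis using winding_mult_const[OF pg lg ig, of "of_real s"] s wg True False by (simp add: ind_def)
    next
      case nT: False
      have q0: "Q c \<noteq> 0" using nT P_ge1[of c] by auto
      have "Mc c \<circ> \<gamma> u w c s = (\<lambda>t. (Q c * of_real s) * (cnj \<circ> g) t)"
        using nT False by (auto simp: Mc_def gam)
      moreover have "path (cnj \<circ> g)" using pg by (simp add: path_def continuous_on_cnj continuous_on_compose)
      moreover have "pathfinish (cnj \<circ> g) = pathstart (cnj \<circ> g)" using lg by (simp add: pathfinish_def pathstart_def)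
      moreover have "0 \<notin> path_image (cnj \<circ> g)" using ig by (auto simp: path_image_def)
      moreover have "winding_number (cnj \<circ> g) 0 = -1"
        using winding_number_cnj[OF pg ig] wg by simp
      ultimately show ?thesis using winding_mult_const[of "cnj \<circ> g" "Q c * of_real s"] q0 s nT False
        by (simp add: ind_def)
    qed
  qed
qed

end

context sat begin

lemma base1:
  assumes nd: "\<forall>z\<in>Z. P z \<noteq> norm (Q z)" and c: "c \<in> box u w" and one: "cbox u w \<inter> Sp = {c}"
  shows "W u w = ind c"
proof -
  have cs: "c \<in> Sp" using one by blast
  obtain \<rho> where rho: "\<rho> > 0" "\<forall>y. 0 < norm (y - c) \<and> norm (y - c) < \<rho> \<longrightarrow> G y \<bullet> Mc c y > 0"
    using local_model[OF cs] nd by blast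
  define D where "D = (Re w - Re u) + (Im w - Im u)"
  have D: "D > 0" using c by (auto simp: D_def in_box_complex_iff)
  define s where "s = min 1 (\<rho> / (2 * D))"
  have s: "0 < s" "s \<le> 1" using rho D by (auto simp: s_def)
  have sD: "s * D < \<rho>"
  proof -
    have "s * D \<le> (\<rho> / (2 * D)) * D" using D by (intro mult_right_mono) (auto simp: s_def)
    also have "\<dots> = \<rho> / 2" using D by simp
    finally show ?thesis using rho by simp
  qed
  have gS: "\<gamma> u w c s t \<notin> Sp" if "t \<in> {0..1}" for t
    using gamma_props(1,2)[OF c s that] one by blast
  have "path_image (\<gamma> u w c s) \<inter> Sp = {}" using gS by (auto simp: path_image_def)
  then have pg: "path (G \<circ> \<gamma> u w c s)"
    using path_G(1)[of "\<gamma> u w c s"] path_gamma by blast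
  have ph: "path (Mc c \<circ> \<gamma> u w c s)"
    using path_gamma(1)[of u w c s] Mc_cont[of c] unfolding path_def
    by (intro continuous_on_compose) (auto intro: continuous_on_subset)
  have "winding_number (Mc c \<circ> \<gamma> u w c s) 0 = winding_number (G \<circ> \<gamma> u w c s) 0"
  proof (rule winding_number_loops_linear_eq[OF pg ph])
    show "pathfinish (G \<circ> \<gamma> u w c s) = pathstart (G \<circ> \<gamma> u w c s)"
      using path_gamma(2) by (simp add: pathfinish_compose pathstart_compose)
    show "pathfinish (Mc c \<circ> \<gamma> u w c s) = pathstart (Mc c \<circ> \<gamma> u w c s)"
      using path_gamma(2) by (simp add: pathfinish_compose pathstart_compose)
    fix t :: real assume t: "t \<in> {0..1}"
    have "0 < norm (\<gamma> u w c s t - c)" using gamma_props(2)[OF c s t] by simp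
    moreover have "norm (\<gamma> u w c s t - c) < \<rho>" using gamma_props(3)[OF c s t] sD D_def by simp
    ultimately have "G (\<gamma> u w c s t) \<bullet> Mc c (\<gamma> u w c s t) > 0" using rho by blast
    then show "0 \<notin> closed_segment ((G \<circ> \<gamma> u w c s) t) ((Mc c \<circ> \<gamma> u w c s) t)"
      by (simp add: inner_pos_segment)
  qed
  then show ?thesis using shrink[OF c one s] model_wind[OF c s cs] nd by simp
qed

lemma exists_gap:
  fixes a1 a2 :: real
  assumes "a1 < a2" "finite S"
  shows "\<exists>t. a1 < t \<and> t < a2 \<and> t \<notin> S"
proof -
  have "infinite {a1<..<a2}" using assms by simp
  then obtain t where "t \<in> {a1<..<a2} - S" using assms(2)
    by (metis Diff_infinite_finite ex_in_conv finite.emptyI)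
  then show ?thesis by auto
qed

lemma rect_index:
  assumes nd: "\<forall>z\<in>Z. P z \<noteq> norm (Q z)"
  shows "Re u < Re w \<Longrightarrow> Im u < Im w \<Longrightarrow> cbox u w \<inter> Sp \<subseteq> box u w \<Longrightarrow> W u w = (\<Sum>c\<in>Sp \<inter> box u w. ind c)"
proof (induction "card (Sp \<inter> box u w)" arbitrary: u w rule: less_induct)
  case less
  have finSp: "finite Sp" using Z_finite[OF nd] finite_B by (simp add: Sp_def)
  have eqbox: "cbox u w \<inter> Sp = Sp \<inter> box u w" using less.prems box_subset_cbox by blast
  have fin: "finite (Sp \<inter> box u w)" using finSp by simp
  consider "Sp \<inter> box u w = {}" | c where "Sp \<inter> box u w = {c}" | c1 c2 where "c1 \<in> Sp \<inter> box u w" "c2 \<in> Sp \<inter> box u w" "c1 \<noteq> c2"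
    by blast
  then show ?case
  proof cases
    case 1
    then show ?thesis using base0[of u w] less.prems eqbox by simp
  next
    case (2 c)
    then show ?thesis using base1[OF nd, of c u w] less.prems eqbox by simp
  next
    case (3 c1 c2)
    show ?thesis
    proof (cases "Re c1 = Re c2")
      case False
      define a1 a2 where "a1 = min (Re c1) (Re c2)" and "a2 = max (Re c1) (Re c2)"
      have "a1 < a2" using False by (auto simp: a1_def a2_def)
      then obtain t where t: "a1 < t" "t < a2" "t \<notin> Re ` Sp" using exists_gap finSp by blast
      have rng: "Re u < t" "t < Re w" using 3 t by (auto simp: a1_def a2_def in_box_complex_iff)
      have line: "\<forall>z\<in>Sp. Re z \<noteq> t" using t by auto
      note sp = split_vert[OF rng less.prems(2,3) line]
      define uq where "uq = Complex t (Im w)"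
      define pw where "pw = Complex t (Im u)"
      have L1: "Re u < Re uq" "Im u < Im uq" "Re pw < Re w" "Im pw < Im w"
        using rng less.prems by (auto simp: uq_def pw_def)
      have dis: "Sp \<inter> box u w = (Sp \<inter> box u uq) \<union> (Sp \<inter> box pw w)"
        "(Sp \<inter> box u uq) \<inter> (Sp \<inter> box pw w) = {}"
        using line less.prems(1,2) rng by (auto simp: uq_def pw_def in_box_complex_iff)
      have c12: "{c1, c2} \<subseteq> Sp \<inter> box u w" using 3 by auto
      obtain cl cr where clr: "cl \<in> Sp \<inter> box u w" "cr \<in> Sp \<inter> box u w" "Re cl < t" "Re cr > t"
        using 3 t by (cases "Re c1 < Re c2") (auto simp: a1_def a2_def)
      have sub1: "Sp \<inter> box u uq \<subseteq> Sp \<inter> box u w" using rng less.prems by (auto simp: uq_def in_box_complex_iff)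
      have sub2: "Sp \<inter> box pw w \<subseteq> Sp \<inter> box u w" using rng less.prems by (auto simp: pw_def in_box_complex_iff)
      have "cr \<notin> box u uq" "cl \<notin> box pw w" using clr by (auto simp: uq_def pw_def in_box_complex_iff)
      then have lt1: "card (Sp \<inter> box u uq) < card (Sp \<inter> box u w)"
        and lt2: "card (Sp \<inter> box pw w) < card (Sp \<inter> box u w)"
        using sub1 sub2 clr fin by (auto intro!: psubset_card_mono)
      have "W u w = W u uq + W pw w" using sp(1) by (simp add: uq_def pw_def)
      also have "W u uq = (\<Sum>c\<in>Sp \<inter> box u uq. ind c)"
        using less.hyps[OF lt1 L1(1,2)] sp(2) by (simp add: uq_def)
      also have "W pw w = (\<Sum>c\<in>Sp \<inter> box pw w. ind c)"
        using less.hyps[OF lt2 L1(3,4)] sp(3) by (simp add: pw_def)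
      finally show ?thesis using dis fin by (simp add: sum.union_disjoint)
    next
      case True
      then have ne: "Im c1 \<noteq> Im c2" using 3 complex_eq_iff by blast
      define a1 a2 where "a1 = min (Im c1) (Im c2)" and "a2 = max (Im c1) (Im c2)"
      have "a1 < a2" using ne by (auto simp: a1_def a2_def)
      then obtain t where t: "a1 < t" "t < a2" "t \<notin> Im ` Sp" using exists_gap finSp by blast
      have rng: "Im u < t" "t < Im w" using 3 t by (auto simp: a1_def a2_def in_box_complex_iff)
      have line: "\<forall>z\<in>Sp. Im z \<noteq> t" using t by auto
      note sp = split_horiz[OF rng less.prems(1,3) line]
      define uq where "uq = Complex (Re w) t"
      define pw where "pw = Complex (Re u) t"
      have L1: "Re u < Re uq" "Im u < Im uq" "Re pw < Re w" "Im pw < Im w"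
        using rng less.prems by (auto simp: uq_def pw_def)
      have dis: "Sp \<inter> box u w = (Sp \<inter> box u uq) \<union> (Sp \<inter> box pw w)"
        "(Sp \<inter> box u uq) \<inter> (Sp \<inter> box pw w) = {}"
        using line less.prems(1,2) rng by (auto simp: uq_def pw_def in_box_complex_iff)
      obtain cl cr where clr: "cl \<in> Sp \<inter> box u w" "cr \<in> Sp \<inter> box u w" "Im cl < t" "Im cr > t"
        using 3 t by (cases "Im c1 < Im c2") (auto simp: a1_def a2_def)
      have sub1: "Sp \<inter> box u uq \<subseteq> Sp \<inter> box u w" using rng less.prems by (auto simp: uq_def in_box_complex_iff)
      have sub2: "Sp \<inter> box pw w \<subseteq> Sp \<inter> box u w" using rng less.prems by (auto simp: pw_def in_box_complex_iff)
      have "cr \<notin> box u uq" "cl \<notin> box pw w" using clr by (auto simp: uq_def pw_def in_box_complex_iff)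
      then have lt1: "card (Sp \<inter> box u uq) < card (Sp \<inter> box u w)"
        and lt2: "card (Sp \<inter> box pw w) < card (Sp \<inter> box u w)"
        using sub1 sub2 clr fin by (auto intro!: psubset_card_mono)
      have "W u w = W u uq + W pw w" using sp(1) by (simp add: uq_def pw_def)
      also have "W u uq = (\<Sum>c\<in>Sp \<inter> box u uq. ind c)"
        using less.hyps[OF lt1 L1(1,2)] sp(2) by (simp add: uq_def)
      also have "W pw w = (\<Sum>c\<in>Sp \<inter> box pw w. ind c)"
        using less.hyps[OF lt2 L1(3,4)] sp(3) by (simp add: pw_def)
      finally show ?thesis using dis fin by (simp add: sum.union_disjoint)
    qed
  qed
qed

end

context sat begin

lemma Sp_bound: "c \<in> Sp \<Longrightarrow> norm c < R1"
proof -
  assume c: "c \<in> Sp"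
  show "norm c < R1"
  proof (cases "c \<in> B")
    case True
    then obtain j where "j < n" "c = b j" unfolding B_def by auto
    then have "norm c \<le> Ksum" using norm_b_le by simp
    then show ?thesis using Msum_nonneg unfolding R1_def by simp
  next
    case False
    then have "G c = 0" using c by (simp add: Sp_def Z_def)
    then show ?thesis using G_far[of c] by force
  qed
qed

lemma index_sum:
  assumes nd: "\<forall>z\<in>Z. P z \<noteq> norm (Q z)"
  shows "(\<Sum>c\<in>Sp. ind c) = 1"
proof -
  define R where "R = R1 + 1"
  define u w where "u = Complex (-R) (-R)" and "w = Complex R R"
  have R1p: "R1 > 0" unfolding R1_def Ksum_def using Msum_nonneg by (smt (verit) norm_ge_zero sum_nonneg)
  have inbox: "c \<in> box u w" if "c \<in> Sp" for c
  proof -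
    have "norm c < R" using Sp_bound[OF that] by (simp add: R_def)
    then show ?thesis using abs_Re_le_cmod[of c] abs_Im_le_cmod[of c]
      by (auto simp: u_def w_def in_box_complex_iff abs_less_iff)
  qed
  have lt: "Re u < Re w" "Im u < Im w" using R1p by (auto simp: u_def w_def R_def)
  have bd: "cbox u w \<inter> Sp \<subseteq> box u w" using inbox by blast
  have spb: "Sp \<inter> box u w = Sp" using inbox by blast
  have "W u w = (\<Sum>c\<in>Sp. ind c)" using rect_index[OF nd lt bd] spb by simp
  moreover have "W u w = 1"
  proof -
    have pi: "path_image (rectpath u w) \<inter> Sp = {}" using rect_bd[OF bd] lt by simp
    have far: "G z \<bullet> z > 0" if "z \<in> path_image (rectpath u w)" for z
    proof -
      have "z \<in> cbox u w - box u w" using that path_image_rectpath_cbox_minus_box[of u w] lt by simp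
      then have "\<bar>Re z\<bar> = R \<or> \<bar>Im z\<bar> = R" by (auto simp: u_def w_def in_box_complex_iff in_cbox_complex_iff)
      then have "norm z \<ge> R" using abs_Re_le_cmod[of z] abs_Im_le_cmod[of z] by auto
      then show ?thesis using G_far[of z] by (simp add: R_def)
    qed
    have "winding_number (G \<circ> rectpath u w) 0 = winding_number (rectpath u w) 0"
    proof (rule winding_number_loops_linear_eq)
      show "path (G \<circ> rectpath u w)" using path_G(1)[OF path_rectpath pi] .
      show "pathfinish (G \<circ> rectpath u w) = pathstart (G \<circ> rectpath u w)"
        by (simp add: pathfinish_compose pathstart_compose)
      fix t :: real assume "t \<in> {0..1}"
      then have "rectpath u w t \<in> path_image (rectpath u w)" by (simp add: path_image_def)
      then have "rectpath u w t \<bullet> (G \<circ> rectpath u w) t > 0" using far by (simp add: inner_commute)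
      then show "0 \<notin> closed_segment (rectpath u w t) ((G \<circ> rectpath u w) t)" by (rule inner_pos_segment)
    qed auto
    also have "\<dots> = 1" using R1p by (intro winding_number_rectpath) (auto simp: u_def w_def in_box_complex_iff R_def)
    finally show ?thesis unfolding W_def .
  qed
  ultimately show ?thesis by simp
qed

definition "Zmin = {z\<in>Z. P z > norm (Q z)}"
definition "Zsad = {z\<in>Z. P z < norm (Q z)}"

lemma count_complex:
  assumes nd: "\<forall>z\<in>Z. P z \<noteq> norm (Q z)"
  shows "card Zsad + 1 = n + card Zmin" "finite Zsad" "finite Zmin"
proof -
  have fZ: "finite Z" using Z_finite[OF nd] .
  show fs: "finite Zsad" "finite Zmin" using fZ by (auto simp: Zsad_def Zmin_def)
  have Sp: "Sp = B \<union> (Zmin \<union> Zsad)" using nd by (auto simp: Sp_def Zmin_def Zsad_def)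
  have d1: "B \<inter> (Zmin \<union> Zsad) = {}" by (auto simp: Zmin_def Zsad_def Z_def)
  have d2: "Zmin \<inter> Zsad = {}" by (auto simp: Zmin_def Zsad_def)
  have "(\<Sum>c\<in>Sp. ind c) = (\<Sum>c\<in>B. ind c) + ((\<Sum>c\<in>Zmin. ind c) + (\<Sum>c\<in>Zsad. ind c))"
    unfolding Sp using d1 d2 fs finite_B by (simp add: sum.union_disjoint)
  also have "(\<Sum>c\<in>B. ind c) = of_nat (card B)" by (simp add: ind_def)
  also have "(\<Sum>c\<in>Zmin. ind c) = of_nat (card Zmin)" by (simp add: ind_def Zmin_def Z_def)
  also have "(\<Sum>c\<in>Zsad. ind c) = - of_nat (card Zsad)" by (simp add: ind_def Zsad_def Z_def)
  also have "card B = n" unfolding B_def using binj by (simp add: card_image)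
  finally have "(of_nat n + (of_nat (card Zmin) - of_nat (card Zsad)) :: complex) = 1" using index_sum[OF nd] by simp
  then have "(of_nat (n + card Zmin) :: complex) = of_nat (card Zsad + 1)" by (simp add: algebra_simps)
  then show "card Zsad + 1 = n + card Zmin" using of_nat_eq_iff by metis
qed

lemma lmin_iff:
  assumes nd: "\<forall>z\<in>Z. P z \<noteq> norm (Q z)"
  shows "{z. lmin z} = Zmin"
proof (intro set_eqI iffI)
  fix z assume "z \<in> {z. lmin z}"
  then have l: "lmin z" by simp
  then have z: "z \<notin> B" "G z = 0" using lmin_crit by (auto simp: lmin_def)
  then have "z \<in> Z" by (simp add: Z_def)
  moreover have "\<not> P z < norm (Q z)" using saddle_not_lmin[OF z] l by blast
  ultimately show "z \<in> Zmin" using nd by (auto simp: Zmin_def)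
next
  fix z assume "z \<in> Zmin"
  then show "z \<in> {z. lmin z}" using min_lmin by (auto simp: Zmin_def Z_def)
qed

lemma saddle_iff:
  assumes nd: "\<forall>z\<in>Z. P z \<noteq> norm (Q z)"
  shows "{z. z \<notin> B \<and> G z = 0 \<and> \<not> lmin z \<and> \<not> lmax z} = Zsad"
proof (intro set_eqI iffI)
  fix z assume "z \<in> {z. z \<notin> B \<and> G z = 0 \<and> \<not> lmin z \<and> \<not> lmax z}"
  then have z: "z \<notin> B" "G z = 0" "\<not> lmin z" by auto
  then have "z \<in> Z" by (simp add: Z_def)
  moreover have "\<not> P z > norm (Q z)" using min_lmin[OF z(1,2)] z(3) by blast
  ultimately show "z \<in> Zsad" using nd by (auto simp: Zsad_def)
next
  fix z assume "z \<in> Zsad"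
  then show "z \<in> {z. z \<notin> B \<and> G z = 0 \<and> \<not> lmin z \<and> \<not> lmax z}"
    using saddle_not_lmin no_lmax by (auto simp: Zsad_def Z_def)
qed

end

context sat begin

lemma phi_log:
  assumes "0 < r" "r \<le> 1"
  shows "phi r \<ge> phi 1 - ln r"
proof -
  have "(\<lambda>s. phi s + ln s) 1 \<le> (\<lambda>s. phi s + ln s) r"
  proof (rule DERIV_nonpos_imp_nonincreasing[OF assms(2)])
    fix x assume x: "r \<le> x" "x \<le> 1"
    then have x0: "x > 0" using assms by simp
    have "((\<lambda>s. phi s + ln s) has_real_derivative (- 1 / x powr \<alpha> + 1 / x)) (at x)"
      using phid[OF x0] x0 by (auto intro!: derivative_eq_intros)
    moreover have "x powr \<alpha> \<le> x" using powr_le_one_le[OF x0 x(2)] alpha by simp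
    then have "1 / x \<le> 1 / x powr \<alpha>" using x0 by (intro divide_left_mono) auto
    ultimately show "\<exists>y. ((\<lambda>s. phi s + ln s) has_real_derivative y) (at x) \<and> y \<le> 0" by force
  qed
  then show ?thesis by simp
qed

lemma phi_lin:
  assumes "1 \<le> r"
  shows "phi r \<ge> phi 1 - (r - 1)"
proof -
  have "(\<lambda>s. phi s + s) 1 \<le> (\<lambda>s. phi s + s) r"
  proof (rule DERIV_nonneg_imp_nondecreasing[OF assms])
    fix x assume x: "1 \<le> x" "x \<le> r"
    then have x0: "x > 0" by simp
    have "((\<lambda>s. phi s + s) has_real_derivative (- 1 / x powr \<alpha> + 1)) (at x)"
      using phid[OF x0] x0 by (auto intro!: derivative_eq_intros)
    moreover have "x powr \<alpha> \<ge> 1" using ge_one_powr_ge_zero[OF x(1)] alpha by simp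
    then have "1 / x powr \<alpha> \<le> 1 / 1" by (intro divide_left_mono) auto
    ultimately show "\<exists>y. ((\<lambda>s. phi s + s) has_real_derivative y) (at x) \<and> y \<ge> 0" by force
  qed
  then show ?thesis by simp
qed

lemma phi_lower:
  assumes "0 < r"
  shows "phi r \<ge> phi 1 - r"
proof (cases "r \<le> 1")
  case True
  then have "phi r \<ge> phi 1 - ln r" using phi_log assms by blast
  moreover have "ln r \<le> 0" using True assms by simp
  ultimately show ?thesis using assms by linarith
next
  case False
  then show ?thesis using phi_lin[of r] by linarith
qed

lemma extra_term: "(z::complex) \<noteq> c \<Longrightarrow> 0 \<le> phi (norm (z - c)) - phi 1 + norm (z - c)"
  using phi_lower[of "norm (z - c)"] by simp

definition "Aphi = phi 1 * Msum"
definition "K2 = (\<Sum>j<n. m j * norm (b j))"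

lemma V_split:
  "V z = (norm z)^2/2 + (\<Sum>j<n. m j * (phi 1 - norm (z - b j))) + (\<Sum>j<n. m j * (phi (norm (z - b j)) - phi 1 + norm (z - b j)))"
  unfolding V_def by (simp add: sum.distrib[symmetric] algebra_simps)

lemma sum_lin_bound: "(\<Sum>j<n. m j * (phi 1 - norm (z - b j))) \<ge> Aphi - Msum * norm z - K2"
proof -
  have "(\<Sum>j<n. m j * (phi 1 - norm (z - b j))) \<ge> (\<Sum>j<n. m j * (phi 1 - norm z - norm (b j)))"
  proof (intro sum_mono mult_left_mono)
    fix j assume "j \<in> {..<n}"
    then show "0 \<le> m j" using mpos by (simp add: less_imp_le)
    show "phi 1 - norm z - norm (b j) \<le> phi 1 - norm (z - b j)" using norm_triangle_ineq4[of z "b j"] by linarith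
  qed
  also have "(\<Sum>j<n. m j * (phi 1 - norm z - norm (b j))) = Aphi - Msum * norm z - K2"
    unfolding Aphi_def Msum_def K2_def by (simp add: algebra_simps sum_subtractf sum_distrib_left sum_distrib_right sum.distrib)
  finally show ?thesis .
qed

lemma extra_nonneg:
  assumes "z \<notin> B"
  shows "(\<Sum>j<n. m j * (phi (norm (z - b j)) - phi 1 + norm (z - b j))) \<ge> 0"
  using mpos extra_term notB[OF assms] by (intro sum_nonneg mult_nonneg_nonneg) (auto simp: less_imp_le)

lemma V_lower: "z \<notin> B \<Longrightarrow> V z \<ge> (norm z)^2/2 + Aphi - Msum * norm z - K2"
  using V_split[of z] sum_lin_bound[of z] extra_nonneg[of z] by linarith

lemma V_lower_near:
  assumes z: "z \<notin> B" and j: "j < n" and r: "norm (z - b j) \<le> 1"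
  shows "V z \<ge> (norm z)^2/2 + Aphi - Msum * norm z - K2 - m j * ln (norm (z - b j))"
proof -
  have r0: "norm (z - b j) > 0" using notB[OF z j] by simp
  have "(\<Sum>k<n. m k * (phi (norm (z - b k)) - phi 1 + norm (z - b k))) \<ge> m j * (phi (norm (z - b j)) - phi 1 + norm (z - b j))"
    using mpos extra_term notB[OF z] j
    by (intro member_le_sum mult_nonneg_nonneg) (auto simp: less_imp_le)
  also have "m j * (phi (norm (z - b j)) - phi 1 + norm (z - b j)) \<ge> m j * (- ln (norm (z - b j)))"
  proof (rule mult_left_mono)
    show "- ln (norm (z - b j)) \<le> phi (norm (z - b j)) - phi 1 + norm (z - b j)"
      using phi_log[OF r0 r] r0 by linarith
  qed (use mpos[OF j] in simp)
  finally show ?thesis using V_split[of z] sum_lin_bound[of z] by simp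
qed

end

context sat begin

lemma global_min: "\<exists>x. x \<notin> B \<and> (\<forall>y. y \<notin> B \<longrightarrow> V x \<le> V y)"
proof -
  obtain w0 where w0: "w0 \<notin> B" using ex_new_if_finite[OF infinite_UNIV_char_0 finite_B] by blast
  define c0 where "c0 = V w0"
  define M where "M = Msum"
  have M0: "M \<ge> 0" using Msum_nonneg by (simp add: M_def)
  define X where "X = c0 - Aphi + K2"
  define R where "R = 2 * M + \<bar>X\<bar> + 2"
  have far: "V y > c0" if y: "y \<notin> B" "norm y > R" for y
  proof -
    have "norm y * (norm y / 2 - M) \<ge> (\<bar>X\<bar> + 2) * 1"
    proof (rule mult_mono)
      show "\<bar>X\<bar> + 2 \<le> norm y" using y M0 by (simp add: R_def)
      show "1 \<le> norm y / 2 - M" using y M0 by (simp add: R_def field_simps)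
    qed auto
    moreover have "norm y * (norm y / 2 - M) = (norm y)^2/2 - M * norm y" by (simp add: power2_eq_square algebra_simps)
    ultimately have "(norm y)^2/2 - M * norm y > X" by simp
    then show ?thesis using V_lower[OF y(1)] by (simp add: X_def M_def)
  qed
  define Y where "Y j = (c0 - Aphi + K2 + M * (Ksum + 1)) / m j" for j
  define \<delta> where "\<delta> j = exp (- (\<bar>Y j\<bar> + 1))" for j
  have dpos: "\<delta> j > 0" for j by (simp add: \<delta>_def)
  have dle: "\<delta> j < 1" for j by (simp add: \<delta>_def)
  have near: "V y > c0" if y: "y \<notin> B" and j: "j < n" and d: "norm (y - b j) < \<delta> j" for y j
  proof -
    define r where "r = norm (y - b j)"
    have r0: "r > 0" using notB[OF y j] by (simp add: r_def)
    have r1: "r < 1" using d dle[of j] by (simp add: r_def)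
    have ny: "norm y \<le> Ksum + 1"
      using norm_triangle_ineq2[of y "b j"] norm_b_le[OF j] r1 unfolding r_def by linarith
    have "ln r < ln (\<delta> j)" using r0 d dpos[of j] by (simp add: r_def ln_less_cancel_iff)
    then have lr: "ln r < - (\<bar>Y j\<bar> + 1)" by (simp add: \<delta>_def)
    have mj: "m j > 0" using mpos j by simp
    have "m j * (\<bar>Y j\<bar> + 1) < m j * (- ln r)" using lr mj by (intro mult_strict_left_mono) auto
    then have "- (m j * ln r) > m j * (\<bar>Y j\<bar> + 1)" by simp
    moreover have "m j * (\<bar>Y j\<bar> + 1) \<ge> m j * Y j + m j" using mj by (simp add: algebra_simps mult_left_mono)
    moreover have "m j * Y j = c0 - Aphi + K2 + M * (Ksum + 1)" using mj by (simp add: Y_def)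
    moreover have "M * norm y \<le> M * (Ksum + 1)" using ny M0 by (simp add: mult_left_mono)
    moreover have "(norm y)^2 / 2 \<ge> 0" by simp
    moreover have "V y \<ge> (norm y)^2/2 + Aphi - Msum * norm y - K2 - m j * ln r"
      using V_lower_near[OF y j] r1 unfolding r_def by simp
    ultimately show ?thesis using mj unfolding M_def by linarith
  qed
  define K where "K = cball 0 R - (\<Union>j<n. ball (b j) (\<delta> j))"
  have cK: "compact K" unfolding K_def by (intro compact_diff) auto
  have KB: "K \<inter> B = {}" using dpos unfolding K_def B_def by force
  have w0K: "w0 \<in> K"
  proof -
    have "norm w0 \<le> R" using far[OF w0] by (force simp: c0_def)
    moreover have "w0 \<notin> ball (b j) (\<delta> j)" if "j < n" for j
      using near[OF w0 that] by (force simp: c0_def dist_norm norm_minus_commute)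
    ultimately show ?thesis unfolding K_def by auto
  qed
  have "K \<subseteq> - B" using KB by blast
  with V_cont have "continuous_on K V" by (rule continuous_on_subset)
  then obtain x where x: "x \<in> K" "\<forall>y\<in>K. V x \<le> V y"
    using continuous_attains_inf[OF cK] w0K by blast
  have "V x \<le> V y" if y: "y \<notin> B" for y
  proof (cases "y \<in> K")
    case True then show ?thesis using x by blast
  next
    case False
    then have "norm y > R \<or> (\<exists>j<n. norm (y - b j) < \<delta> j)"
      unfolding K_def by (auto simp: dist_norm norm_minus_commute)
    then have "V y > c0" using far near y by blast
    moreover have "V x \<le> c0" using x w0K by (simp add: c0_def)
    ultimately show ?thesis by simp
  qed
  moreover have "x \<notin> B" using x KB by blast
  ultimately show ?thesis by blast
qed

end


definition c2 :: "real^2 \<Rightarrow> complex" where "c2 x = Complex (x$1) (x$2)"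
definition r2 :: "complex \<Rightarrow> real^2" where "r2 z = vector [Re z, Im z]"

lemma c2_r2 [simp]: "c2 (r2 z) = z" by (simp add: c2_def r2_def complex_eq_iff)
lemma r2_c2 [simp]: "r2 (c2 x) = x" by (simp add: c2_def r2_def vec_eq_iff forall_2)
lemma c2_diff: "c2 (x - y) = c2 x - c2 y" by (simp add: c2_def complex_eq_iff)
lemma c2_add: "c2 (x + y) = c2 x + c2 y" by (simp add: c2_def complex_eq_iff)
lemma c2_scaleR: "c2 (t *\<^sub>R x) = t *\<^sub>R c2 x" by (simp add: c2_def complex_eq_iff)
lemma c2_inner: "c2 x \<bullet> c2 y = x \<bullet> y" by (simp add: c2_def inner_vec_def sum_2 inner_complex_def)
lemma norm_c2: "norm (c2 x) = norm x" by (simp add: norm_eq_sqrt_inner c2_inner)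
lemma dist_c2: "dist (c2 x) (c2 y) = dist x y" by (simp add: dist_norm norm_c2 c2_diff[symmetric])
lemma c2_inj: "c2 x = c2 y \<longleftrightarrow> x = y" by (metis r2_c2)
lemma r2_inner: "r2 z \<bullet> r2 w = z \<bullet> w" by (metis c2_inner c2_r2)
lemma lin_c2: "bounded_linear c2"
  by (rule bounded_linear_intro[of _ 1]) (auto simp: c2_add c2_scaleR norm_c2)
lemma r2_add: "r2 (z + w) = r2 z + r2 w" by (metis c2_add c2_inj c2_r2)
lemma r2_scaleR: "r2 (t *\<^sub>R z) = t *\<^sub>R r2 z" by (metis c2_scaleR c2_inj c2_r2)
lemma norm_r2: "norm (r2 z) = norm z" by (metis c2_r2 norm_c2)
lemma lin_r2: "bounded_linear r2"
  by (rule bounded_linear_intro[of _ 1]) (auto simp: r2_add r2_scaleR norm_r2)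



context sat begin

lemma kernel_vec:
  assumes "P z = norm (Q z)"
  shows "\<exists>v. v \<noteq> 0 \<and> L z v = 0"
proof -
  have p: "P z > 0" using P_ge1[of z] by simp
  define v where "v = csqrt (- Q z / of_real (P z))"
  have nv: "norm v = 1" using assms p by (simp add: v_def norm_divide)
  have v2: "v^2 = - Q z / of_real (P z)" by (simp add: v_def)
  have "Q z * cnj v = - of_real (P z) * v^2 * cnj v" using v2 p by (simp add: field_simps)
  also have "\<dots> = - of_real (P z) * v * (v * cnj v)" by (simp add: power2_eq_square algebra_simps)
  also have "v * cnj v = 1" using nv complex_norm_square[of v] by simp
  finally have "L z v = 0" unfolding L_def by simp
  moreover have "v \<noteq> 0" using nv by auto
  ultimately show ?thesis by blast
qed

context
  fixes a :: "nat \<Rightarrow> real^2"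
  assumes hb: "\<And>j. b j = c2 (a j)"
begin

definition "Vr = planar_potential phi n m a"
definition "Sr = primaries_domain n a"

lemma Vr_eq: "Vr x = V (c2 x)"
  unfolding Vr_def planar_potential_def V_def by (simp add: hb norm_c2 c2_diff[symmetric])

lemma Sr_iff: "x \<in> Sr \<longleftrightarrow> c2 x \<notin> B"
  unfolding Sr_def primaries_domain_def B_def by (auto simp: hb c2_inj)

lemma Vr_fun: "Vr = V \<circ> c2" using Vr_eq by auto

lemma Vr_deriv:
  assumes "c2 x \<notin> B"
  shows "(Vr has_derivative (\<lambda>h. r2 (G (c2 x)) \<bullet> h)) (at x)"
proof -
  have "((V \<circ> c2) has_derivative (\<lambda>h. G (c2 x) \<bullet> c2 h)) (at x)"
    using has_derivative_compose[OF bounded_linear_imp_has_derivative[OF lin_c2] V_deriv[OF assms]]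
    by (simp add: o_def)
  moreover have "(\<lambda>h. G (c2 x) \<bullet> c2 h) = (\<lambda>h. r2 (G (c2 x)) \<bullet> h)"
    by (metis c2_inner c2_r2)
  ultimately show ?thesis by (simp add: Vr_fun)
qed

lemma crit_iff: "critical_point Vr Sr x \<longleftrightarrow> c2 x \<notin> B \<and> G (c2 x) = 0"
proof
  assume c: "critical_point Vr Sr x"
  then have xB: "c2 x \<notin> B" by (simp add: critical_point_def Sr_iff)
  have "(\<lambda>h. r2 (G (c2 x)) \<bullet> h) = (\<lambda>h. 0)"
    using has_derivative_unique[OF Vr_deriv[OF xB]] c by (simp add: critical_point_def)
  then have "r2 (G (c2 x)) \<bullet> r2 (G (c2 x)) = 0" by metis
  then show "c2 x \<notin> B \<and> G (c2 x) = 0" using xB by (metis c2_r2 inner_eq_zero_iff r2_inner)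
next
  assume h: "c2 x \<notin> B \<and> G (c2 x) = 0"
  have "r2 0 = 0" by (simp add: r2_def vec_eq_iff forall_2)
  then show "critical_point Vr Sr x"
    using Vr_deriv[of x] h unfolding critical_point_def Sr_iff by simp
qed

lemma lmin_r: "local_min_point Vr Sr x \<longleftrightarrow> lmin (c2 x)"
proof
  assume "local_min_point Vr Sr x"
  then obtain e where e: "c2 x \<notin> B" "e > 0" "\<forall>y\<in>Sr. dist y x < e \<longrightarrow> Vr x \<le> Vr y"
    unfolding local_min_point_def Sr_iff by blast
  have "V (c2 x) \<le> V y" if "y \<notin> B" "dist y (c2 x) < e" for y
    using e(3)[rule_format, of "r2 y"] that by (simp add: Sr_iff Vr_eq) (metis c2_r2 dist_c2)
  then show "lmin (c2 x)" unfolding lmin_def using e by blast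
next
  assume "lmin (c2 x)"
  then obtain e where e: "c2 x \<notin> B" "e > 0" "\<forall>y. y \<notin> B \<longrightarrow> dist y (c2 x) < e \<longrightarrow> V (c2 x) \<le> V y"
    unfolding lmin_def by blast
  then show "local_min_point Vr Sr x"
    unfolding local_min_point_def by (auto simp: Sr_iff Vr_eq dist_c2[symmetric] intro!: exI[of _ e])
qed

lemma lmax_r: "local_max_point Vr Sr x \<longleftrightarrow> lmax (c2 x)"
proof
  assume "local_max_point Vr Sr x"
  then obtain e where e: "c2 x \<notin> B" "e > 0" "\<forall>y\<in>Sr. dist y x < e \<longrightarrow> Vr y \<le> Vr x"
    unfolding local_max_point_def Sr_iff by blast
  have "V y \<le> V (c2 x)" if "y \<notin> B" "dist y (c2 x) < e" for y
    using e(3)[rule_format, of "r2 y"] that by (simp add: Sr_iff Vr_eq) (metis c2_r2 dist_c2)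
  then show "lmax (c2 x)" unfolding lmax_def using e by blast
next
  assume "lmax (c2 x)"
  then obtain e where e: "c2 x \<notin> B" "e > 0" "\<forall>y. y \<notin> B \<longrightarrow> dist y (c2 x) < e \<longrightarrow> V y \<le> V (c2 x)"
    unfolding lmax_def by blast
  then show "local_max_point Vr Sr x"
    unfolding local_max_point_def by (auto simp: Sr_iff Vr_eq dist_c2[symmetric] intro!: exI[of _ e])
qed

lemma nondeg_imp:
  assumes nd: "nondegenerate_critical_point Vr Sr x"
  shows "P (c2 x) \<noteq> norm (Q (c2 x))"
proof
  assume eq: "P (c2 x) = norm (Q (c2 x))"
  have r20: "r2 0 = 0" by (simp add: r2_def vec_eq_iff forall_2)
  obtain U g H where U: "open U" "x \<in> U" "U \<subseteq> Sr"
    and gd: "\<forall>y\<in>U. (Vr has_derivative (\<lambda>h. g y \<bullet> h)) (at y)"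
    and gH: "(g has_derivative H) (at x)" and inj: "\<forall>h. H h = 0 \<longrightarrow> h = 0"
    using nd unfolding nondegenerate_critical_point_def by blast
  have geq: "g y = r2 (G (c2 y))" if y: "y \<in> U" for y
  proof -
    have yB: "c2 y \<notin> B" using U y Sr_iff by blast
    have "(\<lambda>h. g y \<bullet> h) = (\<lambda>h. r2 (G (c2 y)) \<bullet> h)"
      using has_derivative_unique[OF gd[rule_format, OF y] Vr_deriv[OF yB]] .
    then have "(g y - r2 (G (c2 y))) \<bullet> (g y - r2 (G (c2 y))) = 0"
      by (metis (no_types, lifting) inner_diff_left right_minus_eq)
    then show ?thesis by simp
  qed
  have xB: "c2 x \<notin> B" using U Sr_iff by blast
  have dGr: "((\<lambda>y. r2 (G (c2 y))) has_derivative (\<lambda>h. r2 (L (c2 x) (c2 h)))) (at x)"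
  proof -
    have "((G \<circ> c2) has_derivative (L (c2 x) \<circ> c2)) (at x)"
      using has_derivative_compose[OF bounded_linear_imp_has_derivative[OF lin_c2] G_deriv[OF xB]]
      by (simp add: o_def)
    from has_derivative_compose[OF this bounded_linear_imp_has_derivative[OF lin_r2]]
    show ?thesis by (simp add: o_def)
  qed
  have "((\<lambda>y. r2 (G (c2 y))) has_derivative H) (at x)"
    by (rule has_derivative_transform_within_open[OF gH U(1,2)]) (simp add: geq)
  then have Heq: "H = (\<lambda>h. r2 (L (c2 x) (c2 h)))" using has_derivative_unique dGr by blast
  obtain v where v: "v \<noteq> 0" "L (c2 x) v = 0" using kernel_vec[OF eq] by blast
  have "H (r2 v) = 0" using v r20 by (simp add: Heq)
  then have "r2 v = 0" using inj by blast
  then show False using v by (metis c2_r2 r20)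
qed

lemma inj_c2: "inj c2" by (simp add: inj_def c2_inj)
lemma range_c2: "range c2 = UNIV" by (metis c2_r2 surj_def)

lemma final_real:
  assumes n1: "n \<ge> 1"
  shows "(\<nexists>x. local_max_point Vr Sr x)
       \<and> (\<exists>x. global_min_point Vr Sr x)
       \<and> (is_morse_on Vr Sr \<longrightarrow>
            finite {x. saddle_point Vr Sr x} \<and> finite {x. local_min_point Vr Sr x}
          \<and> card {x. saddle_point Vr Sr x} = n - 1 + card {x. local_min_point Vr Sr x}
          \<and> card {x. saddle_point Vr Sr x} \<ge> n)"
proof (intro conjI impI)
  show "\<nexists>x. local_max_point Vr Sr x" using lmax_r no_lmax by blast
  obtain z where z: "z \<notin> B" "\<forall>y. y \<notin> B \<longrightarrow> V z \<le> V y" using global_min by blast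
  have gm: "global_min_point Vr Sr (r2 z)"
    unfolding global_min_point_def using z by (auto simp: Sr_iff Vr_eq)
  then show "\<exists>x. global_min_point Vr Sr x" by blast
  assume morse: "is_morse_on Vr Sr"
  have nd: "\<forall>z\<in>Z. P z \<noteq> norm (Q z)"
  proof
    fix z assume "z \<in> Z"
    then have "critical_point Vr Sr (r2 z)" using crit_iff by (simp add: Z_def)
    then have "nondegenerate_critical_point Vr Sr (r2 z)" using morse by (simp add: is_morse_on_def)
    from nondeg_imp[OF this] show "P z \<noteq> norm (Q z)" by simp
  qed
  have smin: "{x. local_min_point Vr Sr x} = c2 -` Zmin"
    using lmin_r lmin_iff[OF nd] by auto
  have ssad: "{x. saddle_point Vr Sr x} = c2 -` Zsad"
    using saddle_iff[OF nd] lmin_r lmax_r crit_iff unfolding saddle_point_def by blast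
  note cc = count_complex[OF nd]
  show "finite {x. saddle_point Vr Sr x}" unfolding ssad using cc(2) inj_c2 by (rule finite_vimageI)
  show "finite {x. local_min_point Vr Sr x}" unfolding smin using cc(3) inj_c2 by (rule finite_vimageI)
  have c1: "card {x. saddle_point Vr Sr x} = card Zsad" unfolding ssad using inj_c2 range_c2 by (simp add: card_vimage_inj)
  have c2': "card {x. local_min_point Vr Sr x} = card Zmin" unfolding smin using inj_c2 range_c2 by (simp add: card_vimage_inj)
  show "card {x. saddle_point Vr Sr x} = n - 1 + card {x. local_min_point Vr Sr x}"
    unfolding c1 c2' using cc(1) n1 by simp
  have "lmin z" using z unfolding lmin_def by (auto intro!: exI[of _ 1])
  then have "z \<in> Zmin" using lmin_iff[OF nd] by blast
  then have "card Zmin \<ge> 1" using cc(3) by (metis One_nat_def Suc_leI card_gt_0_iff empty_iff)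
  then show "card {x. saddle_point Vr Sr x} \<ge> n" unfolding c1 using cc(1) by simp
qed

end
end


theorem mainTheorem1:
  fixes \<alpha> :: real and n :: nat and a :: "nat \<Rightarrow> real^2" and m :: "nat \<Rightarrow> real"
    and phi :: "real \<Rightarrow> real"
  assumes alpha: "\<alpha> \<ge> 1"
    and n: "n \<ge> 1"
    and distinct: "inj_on a {..<n}"
    and masses: "\<forall>i<n. m i > 0"
    and releq: "relative_equilibrium \<alpha> n m a"
    and phi_deriv: "\<forall>r>0. (phi has_real_derivative (- 1 / r powr \<alpha>)) (at r)"
  defines "V \<equiv> planar_potential phi n m a"
    and "S \<equiv> primaries_domain n a"
  shows "(\<nexists>x. local_max_point V S x)
       \<and> (\<exists>x. global_min_point V S x)
       \<and> (is_morse_on V S \<longrightarrow>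
            finite {x. saddle_point V S x} \<and> finite {x. local_min_point V S x}
          \<and> card {x. saddle_point V S x} = n - 1 + card {x. local_min_point V S x}
          \<and> card {x. saddle_point V S x} \<ge> n)"
proof -
  have S: "sat \<alpha> n m (\<lambda>j. c2 (a j)) phi"
  proof
    show "1 \<le> \<alpha>" by (fact alpha)
    show "\<And>i. i < n \<Longrightarrow> 0 < m i" using masses by blast
    show "inj_on (\<lambda>j. c2 (a j)) {..<n}" using distinct by (auto simp: inj_on_def c2_inj)
    show "\<And>r. 0 < r \<Longrightarrow> (phi has_real_derivative - 1 / r powr \<alpha>) (at r)" using phi_deriv by blast
  qed
  note X = sat.final_real[OF S, of a, OF refl n]
  have e1: "sat.Vr n m phi a = V" unfolding V_def using sat.Vr_def[OF S] by simp
  have e2: "sat.Sr n a = S" unfolding S_def using sat.Sr_def[OF S] by simp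
  show ?thesis using X unfolding e1 e2 .
qed


end
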